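(* In the non-stationary non-deterministic bandit described in the context, satisfying the stated assumption with constants $\theta>1$, $\xi>1$, $1/2\le\eta<1$, where $\xi$ is large enough that $\alpha>2$ satisfies $\xi\eta(1-\eta)\le\alpha<\xi(1-\eta)$, run the UCB algorithm of the context and let $\bar\rho_n=\frac1n\sum_{i=1}^KT_i(n)\hat\rho_{i,T_i(n)}$. Then 1. $|\mu^*-\mathbb{E}[\bar\rho_n]|\le O\big(\exp(2\beta R)n^{\frac{\alpha}{\xi(1-\eta)}-1}\big)$, in particular $\lim_{n\to\infty}\mathbb{E}[\bar\rho_n]=\mu^*$; 2. there exist constants $\theta'>1$, $\xi'>1$, $1/2\le\eta'<1$ such that for any $z\ge1$ and $n\in\mathbb{N}$, $$\mathbb{P}[n\bar\rho_n-n\mu^*\ge n^{\eta'}z]\le\frac{\theta'}{z^{\xi'}},\qquad \mathbb{P}[n\bar\rho_n-n\mu^*\le -n^{\eta'}z]\le\frac{\theta'}{z^{\xi'}},$$ where $\eta'=\frac{\alpha}{\xi(1-\eta)}$, $\xi'=\alpha-1$, and $\theta'$ depends on $R,K,\Delta_{\min},\beta,\theta^L,\xi,\alpha,\eta$.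
   Context: Non-deterministic bandit with $K$ arms and finite state set $\mathcal{S}$, $\beta>0$, $\gamma\in(0,1]$. Selecting arm $i$ yields a deterministic cost $c_i\in[-R_c,R_c]$ and a next state $s'$ drawn independently each time from a distribution $P^i$ on $\mathcal{S}$; for each $i,s'$ there is a sequence of (possibly non-stationary) random costs $(x^{s'}_{i,t})_{t\ge1}$ in $[-R_x,R_x]$, the $t$-th cost obtained after state $s'$ follows arm $i$. $R=R_c+R_x$; $\mathrm{ERM}_b(Z)=\frac1b\ln\mathbb{E}[e^{bZ}]$. Let $\hat\rho^{s'}_{i,n}=\frac1{\beta\gamma}\ln(\frac1n\sum_{t=1}^n e^{\beta\gamma x^{s'}_{i,t}})$, $\mu^{s'}_{i,n}=\mathbb{E}[\hat\rho^{s'}_{i,n}]$. Assumption: $\lim_n\mu^{s'}_{i,n}=\mu^{s'}_i$ exists and $\mathbb{P}[n\hat\rho^{s'}_{i,n}-n\mu^{s'}_i\ge n^\eta z]\le\theta/z^\xi$, $\mathbb{P}[n\hat\rho^{s'}_{i,n}-n\mu^{s'}_i\le -n^\eta z]\le\theta/z^\xi$ for all $i,s'$, $z\ge1$, $n\in\mathbb{N}$. With $T^{s'}_i(n)$ the number of times $s'$ was sampled in the first $n$ selections of arm $i$, $\hat\rho_{i,n}=\frac1\beta\ln\big(\frac1n\sum_{s'}\sum_{t=1}^{T^{s'}_i(n)}\exp(\beta(c_i+\gamma x^{s'}_{i,t}))\big)$, and $\mu_i=\frac1\beta\ln\mathbb{E}_{s'\sim P^i}[\exp(\beta(c_i+\gamma\mu^{s'}_i))]$.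 Let $\theta^L>1$ be a constant such that $\mathbb{P}[n\hat\rho_{i,n}-n\mu_i\ge n^\eta z]\le\theta^L/z^\xi$ and $\mathbb{P}[n\hat\rho_{i,n}-n\mu_i\le -n^\eta z]\le\theta^L/z^\xi$ for all $i$, $z\ge1$, $n$ (such a constant, depending on $\xi,\theta,R,\beta,|\mathcal{S}|$, exists). There is a unique arm $i^*$ attaining $\mu^*=\min_i\mu_i$; $\Delta_i=\mu_i-\mu^*$, $\Delta_{\min}=\min_{i\ne i^*}\Delta_i$. Algorithm (with $\alpha>0$): select each arm once, then at timestep $t$ select $a_t=\arg\min_i\{\hat\rho_{i,T_i(t-1)}-b_{t,T_i(t-1)}\}$ with $b_{t,s}=(\theta^L)^{1/\xi}t^{\alpha/\xi}/s^{1-\eta}$, where $T_i(n)$ is the number of selections of arm $i$ during timesteps $1,\dots,n$. *)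

theory Defs
  imports "HOL-Probability.Probability"
begin

text \<open>Arms are indexed by 0..<K, states by natural numbers in a finite set S.
  nx i k w : the next state drawn at the k-th selection (k >= 1) of arm i.
  x i s t w : the t-th cost (t >= 1) obtained after state s followed arm i.\<close>

definition rho_s :: "real \<Rightarrow> real \<Rightarrow> (nat \<Rightarrow> nat \<Rightarrow> nat \<Rightarrow> 'w \<Rightarrow> real)
    \<Rightarrow> nat \<Rightarrow> nat \<Rightarrow> nat \<Rightarrow> 'w \<Rightarrow> real" where
  "rho_s \<beta> \<gamma> x i s n w =
     ln ((\<Sum>t=1..n. exp (\<beta> * \<gamma> * x i s t w)) / real n) / (\<beta> * \<gamma>)"

definition Tst :: "(nat \<Rightarrow> nat \<Rightarrow> 'w \<Rightarrow> nat) \<Rightarrow> nat \<Rightarrow> nat \<Rightarrow> nat \<Rightarrow> 'w \<Rightarrow> nat" where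
  "Tst nx i s n w = card {k \<in> {1..n}. nx i k w = s}"

definition rho_arm :: "real \<Rightarrow> real \<Rightarrow> nat set \<Rightarrow> (nat \<Rightarrow> real)
    \<Rightarrow> (nat \<Rightarrow> nat \<Rightarrow> nat \<Rightarrow> 'w \<Rightarrow> real) \<Rightarrow> (nat \<Rightarrow> nat \<Rightarrow> 'w \<Rightarrow> nat)
    \<Rightarrow> nat \<Rightarrow> nat \<Rightarrow> 'w \<Rightarrow> real" where
  "rho_arm \<beta> \<gamma> S c x nx i n w =
     ln ((\<Sum>s\<in>S. \<Sum>t=1..Tst nx i s n w. exp (\<beta> * (c i + \<gamma> * x i s t w))) / real n) / \<beta>"

definition mu_arm :: "real \<Rightarrow> real \<Rightarrow> (nat \<Rightarrow> real) \<Rightarrow> (nat \<Rightarrow> nat pmf)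
    \<Rightarrow> (nat \<Rightarrow> nat \<Rightarrow> real) \<Rightarrow> nat \<Rightarrow> real" where
  "mu_arm \<beta> \<gamma> c P mu_s i =
     ln (measure_pmf.expectation (P i) (\<lambda>s. exp (\<beta> * (c i + \<gamma> * mu_s i s)))) / \<beta>"

definition Tarm :: "(nat \<Rightarrow> 'w \<Rightarrow> nat) \<Rightarrow> nat \<Rightarrow> nat \<Rightarrow> 'w \<Rightarrow> nat" where
  "Tarm a i n w = card {t \<in> {1..n}. a t w = i}"

definition bonus :: "real \<Rightarrow> real \<Rightarrow> real \<Rightarrow> real \<Rightarrow> nat \<Rightarrow> nat \<Rightarrow> real" where
  "bonus \<theta>L \<xi> \<alpha> \<eta> t s = \<theta>L powr (1/\<xi>) * real t powr (\<alpha>/\<xi>) / real s powr (1 - \<eta>)"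

definition ucb_index where
  "ucb_index \<beta> \<gamma> S c x nx \<theta>L \<xi> \<alpha> \<eta> a i t w =
     rho_arm \<beta> \<gamma> S c x nx i (Tarm a i (t - 1) w) w - bonus \<theta>L \<xi> \<alpha> \<eta> t (Tarm a i (t - 1) w)"

definition rho_bar where
  "rho_bar K \<beta> \<gamma> S c x nx a n w =
     (\<Sum>i<K. real (Tarm a i n w) * rho_arm \<beta> \<gamma> S c x nx i (Tarm a i n w) w) / real n"

definition nd_bandit ::
  "'w measure \<Rightarrow> nat \<Rightarrow> nat set \<Rightarrow> real \<Rightarrow> real \<Rightarrow> real \<Rightarrow> real \<Rightarrow> real \<Rightarrow> real \<Rightarrow> real
   \<Rightarrow> (nat \<Rightarrow> real) \<Rightarrow> (nat \<Rightarrow> nat pmf) \<Rightarrow> (nat \<Rightarrow> nat \<Rightarrow> nat \<Rightarrow> 'w \<Rightarrow> real)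
   \<Rightarrow> (nat \<Rightarrow> nat \<Rightarrow> real) \<Rightarrow> (nat \<Rightarrow> nat \<Rightarrow> 'w \<Rightarrow> nat) \<Rightarrow> bool" where
  "nd_bandit M K S Rc Rx \<beta> \<gamma> \<theta> \<xi> \<eta> c P x mu_s nx \<longleftrightarrow>
     prob_space M \<and> finite S \<and> S \<noteq> {} \<and> \<beta> > 0 \<and> 0 < \<gamma> \<and> \<gamma> \<le> 1 \<and>
     (\<forall>i<K. \<bar>c i\<bar> \<le> Rc) \<and>
     (\<forall>i<K. set_pmf (P i) \<subseteq> S) \<and>
     (\<forall>i<K. \<forall>k\<ge>1. nx i k \<in> measurable M (count_space UNIV) \<and>
         distr M (count_space UNIV) (nx i k) = measure_pmf (P i)) \<and>
     prob_space.indep_vars M (\<lambda>_. count_space UNIV) (\<lambda>(i, k). nx i k) ({..<K} \<times> {1..}) \<and>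
     (\<forall>i<K. \<forall>s\<in>S. \<forall>t\<ge>1. x i s t \<in> borel_measurable M \<and> (\<forall>w\<in>space M. \<bar>x i s t w\<bar> \<le> Rx)) \<and>
     (\<forall>i<K. \<forall>s\<in>S. (\<lambda>n. integral\<^sup>L M (rho_s \<beta> \<gamma> x i s n)) \<longlonglongrightarrow> mu_s i s) \<and>
     (\<forall>i<K. \<forall>s\<in>S. \<forall>z::real. \<forall>n::nat. z \<ge> 1 \<longrightarrow> n \<ge> 1 \<longrightarrow>
        measure M {w \<in> space M. real n * rho_s \<beta> \<gamma> x i s n w - real n * mu_s i s \<ge> real n powr \<eta> * z}
          \<le> \<theta> / z powr \<xi> \<and>
        measure M {w \<in> space M. real n * rho_s \<beta> \<gamma> x i s n w - real n * mu_s i s \<le> - (real n powr \<eta> * z)}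
          \<le> \<theta> / z powr \<xi>)"

text \<open>The UCB algorithm (arbitrary measurable tie-breaking in the argmin).\<close>
definition ucb_policy where
  "ucb_policy M K \<beta> \<gamma> S c x nx \<theta>L \<xi> \<alpha> \<eta> a \<longleftrightarrow>
     (\<forall>t. a t \<in> measurable M (count_space UNIV)) \<and>
     (\<forall>t\<in>{1..K}. \<forall>w\<in>space M. a t w = t - 1) \<and>
     (\<forall>t>K. \<forall>w\<in>space M. a t w < K \<and>
        (\<forall>j<K. ucb_index \<beta> \<gamma> S c x nx \<theta>L \<xi> \<alpha> \<eta> a (a t w) t w
               \<le> ucb_index \<beta> \<gamma> S c x nx \<theta>L \<xi> \<alpha> \<eta> a j t w))"

end

theory Submission
  imports Defs
begin



lemma avg_ln_bound:
  fixes b r :: real and y :: "nat \<Rightarrow> real" and n :: nat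
  assumes b: "b > 0" and n: "n \<ge> 1" and y: "\<And>t. t \<in> {1..n} \<Longrightarrow> \<bar>y t\<bar> \<le> r"
  shows "\<bar>ln ((\<Sum>t=1..n. exp (b * y t)) / real n) / b\<bar> \<le> r"
proof -
  have u: "exp (b * y t) \<le> exp (b * r)" and l: "exp (- (b * r)) \<le> exp (b * y t)" if "t \<in> {1..n}" for t
  proof -
    have "y t \<le> r" "- r \<le> y t" using y[OF that] by auto
    from mult_left_mono[OF this(1), of b] mult_left_mono[OF this(2), of b] b
    show "exp (b * y t) \<le> exp (b * r)" "exp (- (b * r)) \<le> exp (b * y t)" by auto
  qed
  have su: "(\<Sum>t=1..n. exp (b * y t)) \<le> real n * exp (b * r)"
    using sum_bounded_above[of "{1..n}" "\<lambda>t. exp (b * y t)" "exp (b*r)"] u by simp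
  have sl: "real n * exp (- (b * r)) \<le> (\<Sum>t=1..n. exp (b * y t))"
    using sum_bounded_below[of "{1..n}" "exp (- (b*r))" "\<lambda>t. exp (b * y t)"] l by simp
  have np: "real n > 0" using n by simp
  have q1: "(\<Sum>t=1..n. exp (b * y t)) / real n \<le> exp (b * r)" using su np by (simp add: field_simps)
  have q2: "exp (- (b * r)) \<le> (\<Sum>t=1..n. exp (b * y t)) / real n" using sl np by (simp add: field_simps)
  have qp: "0 < (\<Sum>t=1..n. exp (b * y t)) / real n" using q2 by (smt (verit) exp_gt_zero)
  have "ln ((\<Sum>t=1..n. exp (b * y t)) / real n) \<le> ln (exp (b * r))" using q1 qp by (subst ln_le_cancel_iff) auto
  moreover have "ln (exp (- (b * r))) \<le> ln ((\<Sum>t=1..n. exp (b * y t)) / real n)" using q2 qp by (subst ln_le_cancel_iff) auto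
  ultimately show ?thesis using b by (simp add: abs_le_iff field_simps)
qed

locale ctx =
  fixes M :: "'w measure" and K :: nat and S :: "nat set" and Rc Rx \<beta> \<gamma> :: real
    and c :: "nat \<Rightarrow> real" and P :: "nat \<Rightarrow> nat pmf"
    and x :: "nat \<Rightarrow> nat \<Rightarrow> nat \<Rightarrow> 'w \<Rightarrow> real" and mu_s :: "nat \<Rightarrow> nat \<Rightarrow> real"
    and nx :: "nat \<Rightarrow> nat \<Rightarrow> 'w \<Rightarrow> nat"
  assumes PS: "prob_space M" and finS: "finite S" and Sne: "S \<noteq> {}" and bpos: "\<beta> > 0"
    and gpos: "0 < \<gamma>" and gle: "\<gamma> \<le> 1"
    and cb: "\<And>i. i < K \<Longrightarrow> \<bar>c i\<bar> \<le> Rc"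
    and setP: "\<And>i. i < K \<Longrightarrow> set_pmf (P i) \<subseteq> S"
    and nxm: "\<And>i k. i < K \<Longrightarrow> k \<ge> 1 \<Longrightarrow> nx i k \<in> measurable M (count_space UNIV)"
    and nxd: "\<And>i k. i < K \<Longrightarrow> k \<ge> 1 \<Longrightarrow> distr M (count_space UNIV) (nx i k) = measure_pmf (P i)"
    and xm: "\<And>i s t. i < K \<Longrightarrow> s \<in> S \<Longrightarrow> t \<ge> 1 \<Longrightarrow> x i s t \<in> borel_measurable M"
    and xb: "\<And>i s t w. i < K \<Longrightarrow> s \<in> S \<Longrightarrow> t \<ge> 1 \<Longrightarrow> w \<in> space M \<Longrightarrow> \<bar>x i s t w\<bar> \<le> Rx"
    and mulim: "\<And>i s. i < K \<Longrightarrow> s \<in> S \<Longrightarrow> (\<lambda>n. integral\<^sup>L M (rho_s \<beta> \<gamma> x i s n)) \<longlonglongrightarrow> mu_s i s"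
    and K1: "K \<ge> 1"
begin

interpretation prob_space M by (rule PS)

lemma Tst_sum: "Tst nx i s m w = (\<Sum>k\<in>{1..m}. if nx i k w = s then 1 else 0)"
  unfolding Tst_def by (auto simp add: sum.If_cases intro!: arg_cong[where f=card])

lemma Tst_le: "Tst nx i s m w \<le> m"
  unfolding Tst_def by (rule order.trans[OF card_mono[of "{1..m}"]]) auto

lemma Tst_meas: "i < K \<Longrightarrow> (\<lambda>w. Tst nx i s m w) \<in> measurable M (count_space UNIV)"
  unfolding Tst_def
  apply (rule measurable_card)
  using nxm by (auto intro!: pred_intros_logic measurable_count_space_eq2_countable[THEN iffD1, THEN conjunct2, rule_format] )


definition Ss where "Ss i m w = (\<Sum>s\<in>S. \<Sum>t=1..Tst nx i s m w. exp (\<beta> * (c i + \<gamma> * x i s t w)))"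

lemma rho_arm_Ss: "rho_arm \<beta> \<gamma> S c x nx i m w = ln (Ss i m w / real m) / \<beta>"
  unfolding rho_arm_def Ss_def ..

lemma Ss_alt: "Ss i m w = (\<Sum>s\<in>S. \<Sum>t\<in>{1..m}. if t \<le> Tst nx i s m w then exp (\<beta> * (c i + \<gamma> * x i s t w)) else 0)"
  unfolding Ss_def
proof (rule sum.cong[OF refl])
  fix s
  have e: "{1..Tst nx i s m w} = {t \<in> {1..m}. t \<le> Tst nx i s m w}" using Tst_le[of i s m w] by auto
  show "(\<Sum>t=1..Tst nx i s m w. exp (\<beta> * (c i + \<gamma> * x i s t w))) =
    (\<Sum>t\<in>{1..m}. if t \<le> Tst nx i s m w then exp (\<beta> * (c i + \<gamma> * x i s t w)) else 0)"
    unfolding e by (rule sum.inter_filter) simp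
qed

lemma Ss_meas: assumes "i < K" shows "Ss i m \<in> borel_measurable M"
proof -
  have [measurable]: "(\<lambda>w. Tst nx i s m w) \<in> measurable M (count_space UNIV)" for s using Tst_meas assms .
  have [measurable]: "s \<in> S \<Longrightarrow> t \<in> {1..m} \<Longrightarrow> x i s t \<in> borel_measurable M" for s t using xm assms by auto
  show ?thesis unfolding Ss_alt[abs_def]
    by measurable
qed

lemma rho_arm_meas: assumes "i < K" shows "rho_arm \<beta> \<gamma> S c x nx i m \<in> borel_measurable M"
  unfolding rho_arm_Ss[abs_def] using Ss_meas[OF assms] by measurable

lemma Tst_Suc: "Tst nx i s (Suc m) w = Tst nx i s m w + (if nx i (Suc m) w = s then 1 else 0)"
  unfolding Tst_sum by (simp add: sum.nat_ivl_Suc')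

lemma Tst_0: "Tst nx i s 0 w = 0" unfolding Tst_def by simp

lemma Ss_0: "Ss i 0 w = 0" unfolding Ss_def Tst_0 by simp

lemma Ss_Suc: "Ss i (Suc m) w = Ss i m w + (if nx i (Suc m) w \<in> S then
   exp (\<beta> * (c i + \<gamma> * x i (nx i (Suc m) w) (Tst nx i (nx i (Suc m) w) (Suc m) w) w)) else 0)"
proof -
  let ?f = "\<lambda>s t. exp (\<beta> * (c i + \<gamma> * x i s t w))"
  let ?ns = "nx i (Suc m) w"
  have "(\<Sum>t=1..Tst nx i s (Suc m) w. ?f s t) = (\<Sum>t=1..Tst nx i s m w. ?f s t) + (if ?ns = s then ?f s (Tst nx i s (Suc m) w) else 0)" for s
    by (cases "?ns = s") (simp_all add: Tst_Suc)
  then have "Ss i (Suc m) w = (\<Sum>s\<in>S. (\<Sum>t=1..Tst nx i s m w. ?f s t) + (if ?ns = s then ?f s (Tst nx i s (Suc m) w) else 0))"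
    unfolding Ss_def by simp
  also have "\<dots> = Ss i m w + (\<Sum>s\<in>S. if ?ns = s then ?f s (Tst nx i s (Suc m) w) else 0)"
    unfolding Ss_def sum.distrib ..
  also have "(\<Sum>s\<in>S. if ?ns = s then ?f s (Tst nx i s (Suc m) w) else 0) = (if ?ns \<in> S then ?f ?ns (Tst nx i ?ns (Suc m) w) else 0)"
    using finS by (simp add: sum.delta)
  finally show ?thesis .
qed

definition lo where "lo i = exp (\<beta> * (c i - \<gamma> * Rx))"
definition hi where "hi i = exp (\<beta> * (c i + \<gamma> * Rx))"

lemma Ss_bounds:
  assumes "i < K" "w \<in> space M" "\<forall>k\<in>{1..m}. nx i k w \<in> S"
  shows "real m * lo i \<le> Ss i m w \<and> Ss i m w \<le> real m * hi i"
  using assms(3)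
proof (induction m)
  case 0 then show ?case by (simp add: Ss_0)
next
  case (Suc m)
  let ?ns = "nx i (Suc m) w"
  let ?t = "Tst nx i ?ns (Suc m) w"
  have ns: "?ns \<in> S" using Suc.prems by auto
  have t1: "?t \<ge> 1" by (simp add: Tst_Suc)
  have xb': "\<bar>x i ?ns ?t w\<bar> \<le> Rx" using xb[OF assms(1) ns t1 assms(2)] .
  have xl: "- Rx \<le> x i ?ns ?t w" and xu: "x i ?ns ?t w \<le> Rx" using xb' by auto
  have "\<gamma> * x i ?ns ?t w \<le> \<gamma> * Rx" "\<gamma> * (- Rx) \<le> \<gamma> * x i ?ns ?t w"
    using mult_left_mono[OF xl, of \<gamma>] mult_left_mono[OF xu, of \<gamma>] gpos by auto
  then have "\<beta> * (c i - \<gamma> * Rx) \<le> \<beta> * (c i + \<gamma> * x i ?ns ?t w)"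
     "\<beta> * (c i + \<gamma> * x i ?ns ?t w) \<le> \<beta> * (c i + \<gamma> * Rx)"
    using bpos by (auto intro!: mult_left_mono)
  then have e: "lo i \<le> exp (\<beta> * (c i + \<gamma> * x i ?ns ?t w))" "exp (\<beta> * (c i + \<gamma> * x i ?ns ?t w)) \<le> hi i"
    unfolding lo_def hi_def by auto
  have IH: "real m * lo i \<le> Ss i m w \<and> Ss i m w \<le> real m * hi i"
    using Suc.IH Suc.prems by auto
  show ?case unfolding Ss_Suc using ns e IH by (simp add: algebra_simps)
qed

lemma lip_core:
  fixes m Q e l h :: real
  assumes "m \<ge> 1" "l > 0" "m * l \<le> Q" "Q \<le> m * h" "l \<le> e" "e \<le> h"
  shows "\<bar>(m+1) * ln ((Q+e)/(m+1)) - m * ln (Q/m)\<bar> \<le> max \<bar>ln l\<bar> \<bar>ln h\<bar> + h/l + 1"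
proof -
  have Sp: "Q > 0" using assms by (smt (verit) mult_pos_pos)
  have ep: "e > 0" using assms by simp
  have eq: "(m+1) * ln ((Q+e)/(m+1)) - m * ln (Q/m) = ln ((Q+e)/(m+1)) + m * ln (1 + e/Q) - m * ln (1 + 1/m)"
  proof -
    have e1: "ln ((Q+e)/(m+1)) = ln (Q+e) - ln (m+1)" using Sp ep assms by (simp add: ln_div)
    have e2: "ln (Q/m) = ln Q - ln m" using Sp assms by (simp add: ln_div)
    have e3: "ln (1 + e/Q) = ln (Q+e) - ln Q"
    proof -
      have "1 + e/Q = (Q+e)/Q" using Sp by (simp add: field_simps)
      then show ?thesis using Sp ep by (simp add: ln_div)
    qed
    have e4: "ln (1 + 1/m) = ln (m+1) - ln m"
    proof -
      have "1 + 1/m = (m+1)/m" using assms by (simp add: field_simps)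
      then show ?thesis using assms by (simp add: ln_div)
    qed
    show ?thesis unfolding e1 e2 e3 e4 by (simp add: algebra_simps)
  qed
  have a1: "ln l \<le> ln ((Q+e)/(m+1))" "ln ((Q+e)/(m+1)) \<le> ln h"
    using assms Sp ep by (auto simp: field_simps)
  have b0: "0 \<le> ln (1 + e/Q)" using Sp ep by simp
  have b1: "ln (1 + e/Q) \<le> e/Q" using Sp ep by (intro ln_add_one_self_le_self) simp
  have "m * (e/Q) \<le> h/l"
  proof -
    have "m * (e/Q) = (m*e)/Q" by simp
    also have "\<dots> \<le> (m*h)/(m*l)"
      using assms Sp by (intro frac_le) (auto intro!: mult_left_mono)
    also have "\<dots> = h/l" using assms by simp
    finally show ?thesis .
  qed
  then have b2: "0 \<le> m * ln (1 + e/Q)" "m * ln (1 + e/Q) \<le> h/l"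
    using b0 b1 assms mult_left_mono[OF b1, of m] by auto
  have c1: "0 \<le> ln (1 + 1/m)" "ln (1 + 1/m) \<le> 1/m" using assms by (auto intro!: ln_add_one_self_le_self)
  then have c2: "0 \<le> m * ln (1 + 1/m)" "m * ln (1 + 1/m) \<le> 1"
    using assms mult_left_mono[OF c1(2), of m] by auto
  show ?thesis unfolding eq using a1 b2 c2 by (simp add: abs_le_iff) linarith
qed

lemma space_ne: "space M \<noteq> {}" using not_empty .

lemma Rx_nn: "Rx \<ge> 0"
proof -
  obtain w where w: "w \<in> space M" using space_ne by auto
  obtain s where s: "s \<in> S" using Sne by auto
  show ?thesis using xb[of 0 s 1 w] K1 w s by auto
qed

lemma Rc_nn: "Rc \<ge> 0" using cb[of 0] K1 by auto

lemma rho_s_bound: assumes "i < K" "s \<in> S" "w \<in> space M"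
  shows "\<bar>rho_s \<beta> \<gamma> x i s n w\<bar> \<le> Rx"
proof (cases "n = 0")
  case True then show ?thesis using Rx_nn by (simp add: rho_s_def)
next
  case False
  have "\<bar>ln ((\<Sum>t=1..n. exp ((\<beta> * \<gamma>) * x i s t w)) / real n) / (\<beta> * \<gamma>)\<bar> \<le> Rx"
    using False assms bpos gpos by (intro avg_ln_bound) (auto intro!: xb)
  then show ?thesis unfolding rho_s_def by simp
qed

lemma rho_s_meas: assumes "i < K" "s \<in> S" shows "rho_s \<beta> \<gamma> x i s n \<in> borel_measurable M"
proof -
  have [measurable]: "t \<in> {1..n} \<Longrightarrow> x i s t \<in> borel_measurable M" for t using xm assms by auto
  show ?thesis unfolding rho_s_def[abs_def] by measurable
qed

lemma mu_s_bound: assumes "i < K" "s \<in> S" shows "\<bar>mu_s i s\<bar> \<le> Rx"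
proof -
  have "\<bar>integral\<^sup>L M (rho_s \<beta> \<gamma> x i s n)\<bar> \<le> Rx" for n
  proof -
    have int: "integrable M (rho_s \<beta> \<gamma> x i s n)"
      using rho_s_bound[OF assms] rho_s_meas[OF assms] by (intro integrable_const_bound[where B=Rx]) auto
    have "\<bar>integral\<^sup>L M (rho_s \<beta> \<gamma> x i s n)\<bar> \<le> integral\<^sup>L M (\<lambda>w. \<bar>rho_s \<beta> \<gamma> x i s n w\<bar>)"
      by (rule integral_abs_bound)
    also have "\<dots> \<le> integral\<^sup>L M (\<lambda>_. Rx)"
      using int rho_s_bound[OF assms] by (intro integral_mono) auto
    finally have "\<bar>integral\<^sup>L M (rho_s \<beta> \<gamma> x i s n)\<bar> \<le> integral\<^sup>L M (\<lambda>_. Rx)" .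
    then show ?thesis by (simp add: prob_space)
  qed
  then show ?thesis
    using LIMSEQ_le_const2[OF tendsto_rabs[OF mulim[OF assms]], of Rx] by auto
qed

lemma mu_arm_bounds: assumes "i < K"
  shows "c i - \<gamma> * Rx \<le> mu_arm \<beta> \<gamma> c P mu_s i \<and> mu_arm \<beta> \<gamma> c P mu_s i \<le> c i + \<gamma> * Rx"
proof -
  let ?f = "\<lambda>s. exp (\<beta> * (c i + \<gamma> * mu_s i s))"
  have eq: "measure_pmf.expectation (P i) ?f = (\<Sum>s\<in>S. pmf (P i) s * ?f s)"
    using setP[OF assms] finS by (subst integral_measure_pmf[of S]) auto
  have fb: "lo i \<le> ?f s \<and> ?f s \<le> hi i" if "s \<in> S" for s
  proof -
    have m: "- Rx \<le> mu_s i s" "mu_s i s \<le> Rx" using mu_s_bound[OF assms that] by auto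
    have "\<gamma> * (- Rx) \<le> \<gamma> * mu_s i s" "\<gamma> * mu_s i s \<le> \<gamma> * Rx"
      using mult_left_mono[OF m(1), of \<gamma>] mult_left_mono[OF m(2), of \<gamma>] gpos by auto
    then have "\<beta> * (c i - \<gamma> * Rx) \<le> \<beta> * (c i + \<gamma> * mu_s i s)"
      "\<beta> * (c i + \<gamma> * mu_s i s) \<le> \<beta> * (c i + \<gamma> * Rx)"
      using bpos by (auto intro!: mult_left_mono)
    then show ?thesis unfolding lo_def hi_def by auto
  qed
  have s1: "(\<Sum>s\<in>S. pmf (P i) s) = 1" using sum_pmf_eq_1[OF finS setP[OF assms]] .
  have "(\<Sum>s\<in>S. pmf (P i) s * ?f s) \<le> (\<Sum>s\<in>S. pmf (P i) s * hi i)"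
    using fb by (intro sum_mono mult_left_mono) auto
  also have "\<dots> = hi i" using s1 by (simp add: sum_distrib_right[symmetric])
  finally have up: "measure_pmf.expectation (P i) ?f \<le> hi i" using eq by simp
  have "lo i = (\<Sum>s\<in>S. pmf (P i) s * lo i)" using s1 by (simp add: sum_distrib_right[symmetric])
  also have "\<dots> \<le> (\<Sum>s\<in>S. pmf (P i) s * ?f s)"
    using fb by (intro sum_mono mult_left_mono) auto
  finally have low: "lo i \<le> measure_pmf.expectation (P i) ?f" using eq by simp
  have lop: "lo i > 0" unfolding lo_def by simp
  have "ln (lo i) \<le> ln (measure_pmf.expectation (P i) ?f)" "ln (measure_pmf.expectation (P i) ?f) \<le> ln (hi i)"
    using up low lop by auto
  then have "\<beta> * (c i - \<gamma> * Rx) \<le> \<beta> * mu_arm \<beta> \<gamma> c P mu_s i" "\<beta> * mu_arm \<beta> \<gamma> c P mu_s i \<le> \<beta> * (c i + \<gamma> * Rx)"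
    unfolding mu_arm_def lo_def hi_def using bpos by auto
  then show ?thesis using bpos by auto
qed

definition good where "good n w \<longleftrightarrow> w \<in> space M \<and> (\<forall>i<K. \<forall>k\<in>{1..n}. nx i k w \<in> S)"

lemma good_mono: "good n w \<Longrightarrow> m \<le> n \<Longrightarrow> good m w" unfolding good_def by auto

lemma rho_arm_bounds: assumes "good n w" "i < K" "1 \<le> m" "m \<le> n"
  shows "c i - \<gamma> * Rx \<le> rho_arm \<beta> \<gamma> S c x nx i m w \<and> rho_arm \<beta> \<gamma> S c x nx i m w \<le> c i + \<gamma> * Rx"
proof -
  have b: "real m * lo i \<le> Ss i m w \<and> Ss i m w \<le> real m * hi i"
    using assms by (intro Ss_bounds) (auto simp: good_def)
  have mp: "real m > 0" using assms by simp
  have lop: "lo i > 0" unfolding lo_def by simp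
  have q1: "lo i \<le> Ss i m w / real m" "Ss i m w / real m \<le> hi i" using b mp by (auto simp: field_simps)
  have qp: "Ss i m w / real m > 0" using q1 lop by linarith
  have "ln (lo i) \<le> ln (Ss i m w / real m)" "ln (Ss i m w / real m) \<le> ln (hi i)" using q1 qp lop by auto
  then have "\<beta> * (c i - \<gamma> * Rx) \<le> \<beta> * rho_arm \<beta> \<gamma> S c x nx i m w" "\<beta> * rho_arm \<beta> \<gamma> S c x nx i m w \<le> \<beta> * (c i + \<gamma> * Rx)"
    unfolding rho_arm_Ss lo_def hi_def using bpos by auto
  then show ?thesis using bpos by auto
qed

definition L0 where "L0 = (\<beta> * (Rc + Rx) + exp (2 * \<beta> * (Rc + Rx)) + 1) / \<beta>"

lemma lip_step: assumes "good n w" "i < K" "1 \<le> m" "m + 1 \<le> n"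
  shows "\<bar>real (m+1) * rho_arm \<beta> \<gamma> S c x nx i (m+1) w - real m * rho_arm \<beta> \<gamma> S c x nx i m w\<bar> \<le> L0"
proof -
  let ?ns = "nx i (Suc m) w"
  let ?t = "Tst nx i ?ns (Suc m) w"
  let ?e = "exp (\<beta> * (c i + \<gamma> * x i ?ns ?t w))"
  have w: "w \<in> space M" using assms unfolding good_def by auto
  have ns: "?ns \<in> S" using assms unfolding good_def by auto
  have t1: "?t \<ge> 1" by (simp add: Tst_Suc)
  have xb': "\<bar>x i ?ns ?t w\<bar> \<le> Rx" using xb[OF assms(2) ns t1 w] .
  have xl: "- Rx \<le> x i ?ns ?t w" and xu: "x i ?ns ?t w \<le> Rx" using xb' by auto
  have "\<gamma> * x i ?ns ?t w \<le> \<gamma> * Rx" "\<gamma> * (- Rx) \<le> \<gamma> * x i ?ns ?t w"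
    using mult_left_mono[OF xl, of \<gamma>] mult_left_mono[OF xu, of \<gamma>] gpos by auto
  then have "\<beta> * (c i - \<gamma> * Rx) \<le> \<beta> * (c i + \<gamma> * x i ?ns ?t w)"
     "\<beta> * (c i + \<gamma> * x i ?ns ?t w) \<le> \<beta> * (c i + \<gamma> * Rx)"
    using bpos by (auto intro!: mult_left_mono)
  then have e: "lo i \<le> ?e" "?e \<le> hi i" unfolding lo_def hi_def by auto
  have b: "real m * lo i \<le> Ss i m w \<and> Ss i m w \<le> real m * hi i"
    using assms by (intro Ss_bounds) (auto simp: good_def)
  have SS: "Ss i (m+1) w = Ss i m w + ?e" using Ss_Suc[of i m w] ns by simp
  have core: "\<bar>(real m+1) * ln ((Ss i m w + ?e)/(real m+1)) - real m * ln (Ss i m w/real m)\<bar>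
     \<le> max \<bar>ln (lo i)\<bar> \<bar>ln (hi i)\<bar> + hi i / lo i + 1"
    using b e assms by (intro lip_core) (auto simp: lo_def)
  have l1: "max \<bar>ln (lo i)\<bar> \<bar>ln (hi i)\<bar> \<le> \<beta> * (Rc + Rx)"
  proof -
    have g1: "\<gamma> * Rx \<le> Rx" "0 \<le> \<gamma> * Rx" using gle gpos Rx_nn mult_right_mono[of \<gamma> 1 Rx] by auto
    have "\<bar>c i - \<gamma> * Rx\<bar> \<le> Rc + Rx" "\<bar>c i + \<gamma> * Rx\<bar> \<le> Rc + Rx"
      using cb[OF assms(2)] g1 by (simp_all add: abs_le_iff; linarith)+
    then show ?thesis unfolding lo_def hi_def using bpos by (auto simp: abs_mult)
  qed
  have l2: "hi i / lo i \<le> exp (2 * \<beta> * (Rc + Rx))"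
  proof -
    have "hi i / lo i = exp (2 * \<beta> * (\<gamma> * Rx))" unfolding hi_def lo_def
      by (simp add: exp_diff[symmetric] algebra_simps)
    also have "\<dots> \<le> exp (2 * \<beta> * (Rc + Rx))"
      using gle gpos Rx_nn Rc_nn bpos mult_right_mono[of \<gamma> 1 Rx] by auto
    finally show ?thesis .
  qed
  have "\<bar>real (m+1) * rho_arm \<beta> \<gamma> S c x nx i (m+1) w - real m * rho_arm \<beta> \<gamma> S c x nx i m w\<bar>
     = \<bar>(real m+1) * ln ((Ss i m w + ?e)/(real m+1)) - real m * ln (Ss i m w/real m)\<bar> / \<beta>"
  proof -
    have "real (m+1) * rho_arm \<beta> \<gamma> S c x nx i (m+1) w - real m * rho_arm \<beta> \<gamma> S c x nx i m w
      = ((real m+1) * ln ((Ss i m w + ?e)/(real m+1)) - real m * ln (Ss i m w/real m)) / \<beta>"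
      unfolding rho_arm_Ss SS by (simp add: diff_divide_distrib add.commute)
    then show ?thesis using bpos by (simp add: abs_divide)
  qed
  also have "\<dots> \<le> (\<beta> * (Rc + Rx) + exp (2 * \<beta> * (Rc + Rx)) + 1) / \<beta>"
    using core l1 l2 bpos by (intro divide_right_mono) auto
  finally show ?thesis unfolding L0_def .
qed

lemma lip_tele: assumes "good n w" "i < K" "1 \<le> m" "m \<le> n"
  shows "\<bar>real n * rho_arm \<beta> \<gamma> S c x nx i n w - real m * rho_arm \<beta> \<gamma> S c x nx i m w\<bar> \<le> L0 * (real n - real m)"
  using assms(4,1)
proof (induction n rule: dec_induct)
  case base then show ?case by simp
next
  case (step k)
  have "\<bar>real (k+1) * rho_arm \<beta> \<gamma> S c x nx i (k+1) w - real k * rho_arm \<beta> \<gamma> S c x nx i k w\<bar> \<le> L0"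
    using step assms by (intro lip_step[of "Suc k"]) auto
  moreover have "\<bar>real k * rho_arm \<beta> \<gamma> S c x nx i k w - real m * rho_arm \<beta> \<gamma> S c x nx i m w\<bar> \<le> L0 * (real k - real m)"
    using step good_mono[of "Suc k" w k] by auto
  ultimately show ?case by (simp add: algebra_simps)
qed

end



lemma tail_step:
  fixes v n :: nat and \<alpha> :: real
  assumes "v \<ge> 1" "v \<le> n" "\<alpha> \<ge> 2"
  shows "real (n+1) powr (-\<alpha>) \<le> real v powr (2-\<alpha>) * (1/real n - 1/real (n+1))"
proof -
  have n1: "real n \<ge> 1" using assms by simp
  have "real (n+1) powr (-\<alpha>) = real (n+1) powr (2-\<alpha>) / real (n+1) powr 2"
    using powr_diff[of "real (n+1)" "2-\<alpha>" 2] by simp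
  also have "\<dots> = real (n+1) powr (2-\<alpha>) / (real (n+1))^2"
    by (simp add: powr_numeral)
  also have "\<dots> \<le> real v powr (2-\<alpha>) / (real (n+1))^2"
    using assms by (intro divide_right_mono powr_mono2') auto
  also have "\<dots> \<le> real v powr (2-\<alpha>) / (real n * real (n+1))"
    using n1 by (intro divide_left_mono) (auto simp: power2_eq_square intro!: mult_right_mono)
  also have "\<dots> = real v powr (2-\<alpha>) * (1/real n - 1/real (n+1))"
    using n1 by (simp add: field_simps)
  finally show ?thesis .
qed

lemma sum_max_bound:
  fixes v n :: nat and \<alpha> :: real
  assumes v: "v \<ge> 1" and a: "\<alpha> \<ge> 2"
  shows "(\<Sum>s=1..n. real (max v s) powr (-\<alpha>)) \<le> 2 * real v powr (1-\<alpha>)"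
proof -
  have vv: "real v powr (-\<alpha>) * real v = real v powr (1-\<alpha>)"
    using powr_add[of "real v" "-\<alpha>" 1] v by simp
  have vv2: "real v powr (2-\<alpha>) / real v = real v powr (1-\<alpha>)"
    using powr_diff[of "real v" "2-\<alpha>" 1] v by simp
  have p1: "(\<Sum>s=1..n. real (max v s) powr (-\<alpha>)) \<le> real v powr (1-\<alpha>)" if "n \<le> v" for n
  proof -
    have "(\<Sum>s=1..n. real (max v s) powr (-\<alpha>)) = (\<Sum>s=1..n. real v powr (-\<alpha>))"
      using that by (intro sum.cong) auto
    also have "\<dots> = real n * real v powr (-\<alpha>)" by simp
    also have "\<dots> \<le> real v * real v powr (-\<alpha>)" using that by (intro mult_right_mono) auto
    finally show ?thesis using vv by (simp add: mult.commute)
  qed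
  have p2: "(\<Sum>s=1..n. real (max v s) powr (-\<alpha>)) \<le> real v powr (1-\<alpha>) + real v powr (2-\<alpha>) * (1/real v - 1/real n)"
    if "v \<le> n" for n
    using that
  proof (induction n rule: dec_induct)
    case base then show ?case using p1[of v] by simp
  next
    case (step k)
    have "(\<Sum>s=1..Suc k. real (max v s) powr (-\<alpha>)) = (\<Sum>s=1..k. real (max v s) powr (-\<alpha>)) + real (k+1) powr (-\<alpha>)"
      using step by (simp add: max_def)
    also have "\<dots> \<le> real v powr (1-\<alpha>) + real v powr (2-\<alpha>) * (1/real v - 1/real k) + real v powr (2-\<alpha>) * (1/real k - 1/real (k+1))"
      using step tail_step[of v k \<alpha>] v a by simp
    also have "\<dots> = real v powr (1-\<alpha>) + real v powr (2-\<alpha>) * (1/real v - 1/real (Suc k))"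
      by (simp add: algebra_simps)
    finally show ?case .
  qed
  show ?thesis
  proof (cases "n \<le> v")
    case True
    have "0 \<le> real v powr (1-\<alpha>)" by simp
    then show ?thesis using p1[OF True] by linarith
  next
    case False
    then have "(\<Sum>s=1..n. real (max v s) powr (-\<alpha>)) \<le> real v powr (1-\<alpha>) + real v powr (2-\<alpha>) * (1/real v - 1/real n)"
      by (intro p2) auto
    also have "\<dots> \<le> real v powr (1-\<alpha>) + real v powr (2-\<alpha>) * (1/real v)"
      using False v by (intro add_left_mono mult_left_mono) auto
    also have "\<dots> = 2 * real v powr (1-\<alpha>)" using vv2 by simp
    finally show ?thesis .
  qed
qed




definition Bc :: "real \<Rightarrow> real \<Rightarrow> real" where "Bc \<theta>L \<xi> = \<theta>L powr (1/\<xi>)"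
definition Ac :: "real \<Rightarrow> real \<Rightarrow> real \<Rightarrow> real \<Rightarrow> real" where
  "Ac \<theta>L \<xi> \<eta> \<Delta>min = (2 * Bc \<theta>L \<xi> / \<Delta>min) powr (1/(1-\<eta>))"

locale ctx2 = ctx M K S Rc Rx \<beta> \<gamma> c P x mu_s nx
  for M :: "'w measure" and K S Rc Rx \<beta> \<gamma> c P x mu_s nx +
  fixes \<xi> \<eta> \<alpha> \<theta>L \<Delta>min :: real and a :: "nat \<Rightarrow> 'w \<Rightarrow> nat" and istar :: nat
  assumes xi1: "\<xi> > 1" and eta_lo: "1/2 \<le> \<eta>" and eta_hi: "\<eta> < 1" and al2: "\<alpha> > 2"
    and al_lo: "\<xi> * \<eta> * (1 - \<eta>) \<le> \<alpha>" and al_hi: "\<alpha> < \<xi> * (1 - \<eta>)"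
    and thL1: "\<theta>L > 1" and K2: "K \<ge> 2"
    and thL: "\<And>i z n. i < K \<Longrightarrow> z \<ge> 1 \<Longrightarrow> n \<ge> 1 \<Longrightarrow>
          measure M {w \<in> space M. real n * rho_arm \<beta> \<gamma> S c x nx i n w
                          - real n * mu_arm \<beta> \<gamma> c P mu_s i \<ge> real n powr \<eta> * z} \<le> \<theta>L / z powr \<xi> \<and>
          measure M {w \<in> space M. real n * rho_arm \<beta> \<gamma> S c x nx i n w
                          - real n * mu_arm \<beta> \<gamma> c P mu_s i \<le> - (real n powr \<eta> * z)} \<le> \<theta>L / z powr \<xi>"
    and istar: "istar < K"
    and opt: "\<And>i. i < K \<Longrightarrow> i \<noteq> istar \<Longrightarrow> mu_arm \<beta> \<gamma> c P mu_s istar < mu_arm \<beta> \<gamma> c P mu_s i"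
    and Dmin: "\<Delta>min = Min ((\<lambda>i. mu_arm \<beta> \<gamma> c P mu_s i - mu_arm \<beta> \<gamma> c P mu_s istar) ` ({..<K} - {istar}))"
    and pol: "ucb_policy M K \<beta> \<gamma> S c x nx \<theta>L \<xi> \<alpha> \<eta> a"
begin

interpretation prob_space M by (rule PS)

abbreviation "rh i m w \<equiv> rho_arm \<beta> \<gamma> S c x nx i m w"
abbreviation "mu i \<equiv> mu_arm \<beta> \<gamma> c P mu_s i"
abbreviation "T i n w \<equiv> Tarm a i n w"
abbreviation "B \<equiv> Bc \<theta>L \<xi>"
abbreviation "A \<equiv> Ac \<theta>L \<xi> \<eta> \<Delta>min"
abbreviation "eta' \<equiv> \<alpha> / (\<xi> * (1 - \<eta>))"

lemma a_init: "t \<in> {1..K} \<Longrightarrow> w \<in> space M \<Longrightarrow> a t w = t - 1"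
  using pol unfolding ucb_policy_def by auto

lemma a_lt: "1 \<le> t \<Longrightarrow> w \<in> space M \<Longrightarrow> a t w < K"
  using pol K1 unfolding ucb_policy_def by (cases "t \<le> K") auto

lemma a_choice: "t > K \<Longrightarrow> w \<in> space M \<Longrightarrow> j < K \<Longrightarrow>
   ucb_index \<beta> \<gamma> S c x nx \<theta>L \<xi> \<alpha> \<eta> a (a t w) t w \<le> ucb_index \<beta> \<gamma> S c x nx \<theta>L \<xi> \<alpha> \<eta> a j t w"
  using pol unfolding ucb_policy_def by auto

lemma Tarm_Suc: "T i (Suc n) w = T i n w + (if a (Suc n) w = i then 1 else 0)"
proof -
  have "T i n w = (\<Sum>t\<in>{1..n}. if a t w = i then 1 else 0)" for n
    unfolding Tarm_def by (auto simp add: sum.If_cases intro!: arg_cong[where f=card])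
  then show ?thesis by (simp add: sum.nat_ivl_Suc')
qed

lemma Tarm_0: "T i 0 w = 0" unfolding Tarm_def by simp

lemma Tarm_le: "T i n w \<le> n"
  unfolding Tarm_def by (rule order.trans[OF card_mono[of "{1..n}"]]) auto

lemma sum_T: "w \<in> space M \<Longrightarrow> (\<Sum>i<K. T i n w) = n"
proof (induction n)
  case 0 then show ?case by (simp add: Tarm_0)
next
  case (Suc n)
  have "a (Suc n) w < K" using a_lt Suc by auto
  then show ?case using Suc by (simp add: Tarm_Suc sum.distrib)
qed

lemma last_pull: "T i n w \<ge> 1 \<Longrightarrow> \<exists>t\<in>{1..n}. a t w = i \<and> T i (t-1) w + 1 = T i n w"
proof (induction n)
  case 0 then show ?case by (simp add: Tarm_0)
next
  case (Suc n)
  show ?case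
  proof (cases "a (Suc n) w = i")
    case True then show ?thesis by (intro bexI[of _ "Suc n"]) (auto simp: Tarm_Suc)
  next
    case False then show ?thesis using Suc by (force simp: Tarm_Suc)
  qed
qed

lemma T_early: assumes "t \<in> {1..K}" "w \<in> space M" shows "T (t-1) (t-1) w = 0"
proof -
  have "{t' \<in> {1..t-1}. a t' w = t - 1} = {}" using assms a_init[of _ w] by force
  then show ?thesis unfolding Tarm_def by simp
qed

lemma T_star_pos: assumes "t > K" "w \<in> space M" shows "T istar (t-1) w \<ge> 1"
proof -
  have "istar + 1 \<in> {t' \<in> {1..t-1}. a t' w = istar}" using assms istar a_init[of "istar+1" w] by auto
  then have "{t' \<in> {1..t-1}. a t' w = istar} \<noteq> {}" by blast
  then show ?thesis unfolding Tarm_def by (simp add: Suc_le_eq card_gt_0_iff)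
qed

lemma Dmin_pos: "\<Delta>min > 0" and Dmin_le: "\<And>i. i < K \<Longrightarrow> i \<noteq> istar \<Longrightarrow> \<Delta>min \<le> mu i - mu istar"
proof -
  let ?F = "(\<lambda>i. mu i - mu istar) ` ({..<K} - {istar})"
  have fin: "finite ?F" by simp
  have ne: "?F \<noteq> {}"
  proof -
    obtain j where "j < K" "j \<noteq> istar" using K2 istar by (metis One_nat_def Suc_1 Suc_le_lessD less_Suc_eq_0_disj not_less_eq)
    then show ?thesis by auto
  qed
  show "\<Delta>min > 0" unfolding Dmin using fin ne opt by (subst Min_gr_iff) auto
  show "\<And>i. i < K \<Longrightarrow> i \<noteq> istar \<Longrightarrow> \<Delta>min \<le> mu i - mu istar" unfolding Dmin using fin by (intro Min_le) auto
qed

lemma B_gt1: "B > 1"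
proof -
  have "1 powr (1/\<xi>) < \<theta>L powr (1/\<xi>)" using thL1 xi1 by (intro powr_less_mono2) auto
  then show ?thesis unfolding Bc_def by simp
qed

lemma B_powr: "B powr \<xi> = \<theta>L"
  unfolding Bc_def using xi1 thL1 by (simp add: powr_powr)

lemma A_nn: "A \<ge> 0" unfolding Ac_def by simp

lemma A_powr: "A powr (1 - \<eta>) = 2 * B / \<Delta>min"
  unfolding Ac_def using eta_hi Dmin_pos B_gt1 by (simp add: powr_powr)

lemma eta'_eq: "eta' * (1 - \<eta>) = \<alpha> / \<xi>" using eta_hi xi1 by (simp add: field_simps)

lemma eta'_ge: "\<eta> \<le> eta'"
  using al_lo eta_hi xi1 by (simp add: field_simps mult.commute mult.left_commute)

lemma eta'_lt: "eta' < 1"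
  using al_hi eta_hi xi1 by (simp add: field_simps mult.commute)

lemma s_bonus: assumes "s \<ge> 1"
  shows "real s * bonus \<theta>L \<xi> \<alpha> \<eta> t s = real s powr \<eta> * (B * real t powr (\<alpha>/\<xi>))"
proof -
  have 1: "real s / real s powr (1 - \<eta>) = real s powr \<eta>"
    using powr_diff[of "real s" 1 "1-\<eta>"] assms by simp
  have "real s * bonus \<theta>L \<xi> \<alpha> \<eta> t s = (real s / real s powr (1 - \<eta>)) * (B * real t powr (\<alpha>/\<xi>))"
    unfolding bonus_def Bc_def by simp
  then show ?thesis unfolding 1 .
qed

definition thr where "thr v s = real s powr \<eta> * (B * real (max v s) powr (\<alpha>/\<xi>))"

lemma thr_le: assumes "s \<ge> 1" "v \<le> t" "s \<le> t"
  shows "thr v s \<le> real s powr \<eta> * (B * real t powr (\<alpha>/\<xi>))"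
  unfolding thr_def using assms B_gt1 xi1 al2
  by (intro mult_left_mono powr_mono2) auto

lemma bonus_small: assumes "s \<ge> 1" "real s \<ge> A * real n powr eta'" "t \<le> n" "t \<ge> 1"
  shows "bonus \<theta>L \<xi> \<alpha> \<eta> t s \<le> \<Delta>min / 2"
proof -
  have e0: "1 - \<eta> > 0" using eta_hi by simp
  have "real s powr (1-\<eta>) \<ge> (A * real n powr eta') powr (1-\<eta>)"
    using assms e0 A_nn by (intro powr_mono2) auto
  also have "(A * real n powr eta') powr (1-\<eta>) = A powr (1-\<eta>) * real n powr (eta' * (1-\<eta>))"
    by (simp add: powr_mult powr_powr)
  also have "\<dots> = (2 * B / \<Delta>min) * real n powr (\<alpha>/\<xi>)"
    by (simp only: A_powr eta'_eq)
  finally have 1: "real s powr (1-\<eta>) \<ge> (2 * B / \<Delta>min) * real n powr (\<alpha>/\<xi>)" .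
  have 2: "real n powr (\<alpha>/\<xi>) \<ge> real t powr (\<alpha>/\<xi>)"
    using assms xi1 al2 by (intro powr_mono2) auto
  have Bp: "2 * B / \<Delta>min > 0" using B_gt1 Dmin_pos by simp
  have tp: "real t powr (\<alpha>/\<xi>) > 0" using assms by simp
  have den: "real s powr (1-\<eta>) \<ge> (2 * B / \<Delta>min) * real t powr (\<alpha>/\<xi>)"
    using 1 2 Bp by (meson mult_left_mono less_imp_le order.trans)
  have "bonus \<theta>L \<xi> \<alpha> \<eta> t s = B * real t powr (\<alpha>/\<xi>) / real s powr (1-\<eta>)"
    unfolding bonus_def Bc_def ..
  also have "\<dots> \<le> B * real t powr (\<alpha>/\<xi>) / ((2 * B / \<Delta>min) * real t powr (\<alpha>/\<xi>))"
  proof (rule divide_left_mono[OF den])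
    have "0 < (2 * B / \<Delta>min) * real t powr (\<alpha>/\<xi>)" using Bp tp by (rule mult_pos_pos)
    moreover have "real s powr (1-\<eta>) > 0" using assms by simp
    ultimately show "0 < real s powr (1 - \<eta>) * (2 * B / \<Delta>min * real t powr (\<alpha> / \<xi>))" by (rule mult_pos_pos[rotated])
    show "0 \<le> B * real t powr (\<alpha> / \<xi>)" using B_gt1 by simp
  qed
  also have "\<dots> = \<Delta>min / 2" using B_gt1 tp Dmin_pos by (simp add: field_simps)
  finally show ?thesis .
qed

lemma pw:
  assumes w: "w \<in> space M" and n1: "n \<ge> 1" and i: "i < K" "i \<noteq> istar" and v: "v \<ge> 1"
    and big: "real (T i n w) \<ge> A * real n powr eta' + real v + 1"
  shows "(\<exists>s\<in>{1..n}. real s * rh istar s w - real s * mu istar \<ge> thr v s) \<or>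
         (\<exists>s\<in>{1..n}. real s * rh i s w - real s * mu i \<le> - thr v s)"
proof -
  have pA: "A * real n powr eta' \<ge> 0" using A_nn by simp
  have "T i n w \<ge> 1" using big pA v by linarith
  then obtain t where t: "t \<in> {1..n}" "a t w = i" "T i (t-1) w + 1 = T i n w" using last_pull by blast
  define s where "s = T i (t-1) w"
  have s_big: "real s \<ge> A * real n powr eta' + real v" using big t(3) unfolding s_def by linarith
  have s1: "s \<ge> 1" using s_big pA v by linarith
  have tK: "t > K"
  proof (rule ccontr)
    assume "\<not> t > K"
    then have tK: "t \<in> {1..K}" using t by auto
    then have "i = t - 1" using a_init[OF tK w] t by simp
    then show False using T_early[OF tK w] s1 unfolding s_def by simp
  qed
  have st: "s \<le> t - 1" unfolding s_def by (rule Tarm_le)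
  define ss where "ss = T istar (t-1) w"
  have ss1: "ss \<ge> 1" unfolding ss_def using T_star_pos[OF tK w] .
  have sst: "ss \<le> t - 1" unfolding ss_def by (rule Tarm_le)
  have vt: "v \<le> t" using s_big pA st t by linarith
  have ch: "rh i s w - bonus \<theta>L \<xi> \<alpha> \<eta> t s \<le> rh istar ss w - bonus \<theta>L \<xi> \<alpha> \<eta> t ss"
    using a_choice[OF tK w istar] t(2) unfolding ucb_index_def s_def ss_def by simp
  show ?thesis
  proof (cases "rh istar ss w - bonus \<theta>L \<xi> \<alpha> \<eta> t ss > mu istar")
    case True
    then have "real ss * (rh istar ss w - mu istar) \<ge> real ss * bonus \<theta>L \<xi> \<alpha> \<eta> t ss"
      using ss1 by (intro mult_left_mono) auto
    then have "real ss * rh istar ss w - real ss * mu istar \<ge> real ss powr \<eta> * (B * real t powr (\<alpha>/\<xi>))"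
      using s_bonus[OF ss1, of t] by (simp add: algebra_simps)
    moreover have "thr v ss \<le> real ss powr \<eta> * (B * real t powr (\<alpha>/\<xi>))"
      using thr_le[OF ss1 vt] sst by auto
    moreover have "ss \<in> {1..n}" using ss1 sst t by auto
    ultimately show ?thesis by force
  next
    case False
    have bs: "bonus \<theta>L \<xi> \<alpha> \<eta> t s \<le> \<Delta>min / 2"
      using s1 s_big pA v t by (intro bonus_small[where n=n]) auto
    have "rh i s w - mu i \<le> - bonus \<theta>L \<xi> \<alpha> \<eta> t s"
      using False ch bs Dmin_le[OF i] by linarith
    then have "real s * (rh i s w - mu i) \<le> real s * (- bonus \<theta>L \<xi> \<alpha> \<eta> t s)"
      by (intro mult_left_mono) auto
    then have "real s * rh i s w - real s * mu i \<le> - (real s powr \<eta> * (B * real t powr (\<alpha>/\<xi>)))"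
      using s_bonus[OF s1, of t] by (simp add: algebra_simps)
    moreover have "thr v s \<le> real s powr \<eta> * (B * real t powr (\<alpha>/\<xi>))"
      using thr_le[OF s1 vt] st by auto
    moreover have "s \<in> {1..n}" using s1 st t by auto
    ultimately show ?thesis by force
  qed
qed

end



definition Lam :: "real \<Rightarrow> real \<Rightarrow> real" where "Lam \<beta> R = (\<beta> * R + exp (2 * \<beta> * R) + 1) / \<beta> + 3 * R"
definition kap :: "real \<Rightarrow> real \<Rightarrow> nat \<Rightarrow> real" where "kap \<beta> R K = 4 * Lam \<beta> R * (real K - 1)"
definition z0c where "z0c \<beta> R K \<theta>L \<xi> \<eta> \<Delta>min = max 2 (kap \<beta> R K * (Ac \<theta>L \<xi> \<eta> \<Delta>min + 1))"
definition thP where "thP \<beta> R \<xi> \<eta> \<alpha> \<theta>L \<Delta>min K =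
   z0c \<beta> R K \<theta>L \<xi> \<eta> \<Delta>min powr (\<alpha> - 1) + \<theta>L * 2 powr \<xi> + 2 * (real K + 1) * (2 * kap \<beta> R K) powr (\<alpha> - 1) + 1"

context ctx2 begin

interpretation prob_space M by (rule PS)

declare rho_arm_meas[measurable]

definition BadP where "BadP j v n = {w \<in> space M. \<exists>s\<in>{1..n}. real s * rh j s w - real s * mu j \<ge> thr v s}"
definition BadM where "BadM j v n = {w \<in> space M. \<exists>s\<in>{1..n}. real s * rh j s w - real s * mu j \<le> - thr v s}"

lemma BadP_meas: "j < K \<Longrightarrow> BadP j v n \<in> sets M"
  unfolding BadP_def by measurable
lemma BadM_meas: "j < K \<Longrightarrow> BadM j v n \<in> sets M"
  unfolding BadM_def by measurable

lemma thr_z: assumes "s \<ge> 1" "v \<ge> 1"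
  shows "B * real (max v s) powr (\<alpha>/\<xi>) \<ge> 1"
    and "\<theta>L / (B * real (max v s) powr (\<alpha>/\<xi>)) powr \<xi> = real (max v s) powr (-\<alpha>)"
proof -
  have m1: "real (max v s) \<ge> 1" using assms by auto
  have "real (max v s) powr (\<alpha>/\<xi>) \<ge> 1" using m1 xi1 al2 by (intro ge_one_powr_ge_zero) auto
  then show "B * real (max v s) powr (\<alpha>/\<xi>) \<ge> 1" using B_gt1
    by (metis less_imp_le mult_mono mult_1_left zero_le_one order.trans)
  have "(B * real (max v s) powr (\<alpha>/\<xi>)) powr \<xi> = \<theta>L * real (max v s) powr \<alpha>"
    using B_gt1 m1 xi1 by (simp add: powr_mult powr_powr B_powr)
  then show "\<theta>L / (B * real (max v s) powr (\<alpha>/\<xi>)) powr \<xi> = real (max v s) powr (-\<alpha>)"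
    using thL1 by (simp add: powr_minus_divide)
qed

lemma BadP_prob: assumes "j < K" "v \<ge> 1" shows "measure M (BadP j v n) \<le> 2 * real v powr (1-\<alpha>)"
proof -
  let ?Z = "\<lambda>s. B * real (max v s) powr (\<alpha>/\<xi>)"
  let ?E = "\<lambda>s. {w \<in> space M. real s * rh j s w - real s * mu j \<ge> real s powr \<eta> * ?Z s}"
  have eq: "BadP j v n = (\<Union>s\<in>{1..n}. ?E s)" unfolding BadP_def thr_def by auto
  have "measure M (BadP j v n) \<le> (\<Sum>s\<in>{1..n}. measure M (?E s))"
    unfolding eq using assms by (intro finite_measure_subadditive_finite) auto
  also have "\<dots> \<le> (\<Sum>s\<in>{1..n}. real (max v s) powr (-\<alpha>))"
  proof (rule sum_mono)
    fix s assume s: "s \<in> {1..n}"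
    have "measure M (?E s) \<le> \<theta>L / (?Z s) powr \<xi>" using thL[OF assms(1) thr_z(1)[of s v]] s assms by auto
    then show "measure M (?E s) \<le> real (max v s) powr (-\<alpha>)" using thr_z(2)[of s v] s assms by auto
  qed
  also have "\<dots> \<le> 2 * real v powr (1-\<alpha>)" using sum_max_bound[OF assms(2)] al2 by auto
  finally show ?thesis .
qed

lemma BadM_prob: assumes "j < K" "v \<ge> 1" shows "measure M (BadM j v n) \<le> 2 * real v powr (1-\<alpha>)"
proof -
  let ?Z = "\<lambda>s. B * real (max v s) powr (\<alpha>/\<xi>)"
  let ?E = "\<lambda>s. {w \<in> space M. real s * rh j s w - real s * mu j \<le> - (real s powr \<eta> * ?Z s)}"
  have eq: "BadM j v n = (\<Union>s\<in>{1..n}. ?E s)" unfolding BadM_def thr_def by auto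
  have "measure M (BadM j v n) \<le> (\<Sum>s\<in>{1..n}. measure M (?E s))"
    unfolding eq using assms by (intro finite_measure_subadditive_finite) auto
  also have "\<dots> \<le> (\<Sum>s\<in>{1..n}. real (max v s) powr (-\<alpha>))"
  proof (rule sum_mono)
    fix s assume s: "s \<in> {1..n}"
    have "measure M (?E s) \<le> \<theta>L / (?Z s) powr \<xi>" using thL[OF assms(1) thr_z(1)[of s v]] s assms by auto
    then show "measure M (?E s) \<le> real (max v s) powr (-\<alpha>)" using thr_z(2)[of s v] s assms by auto
  qed
  also have "\<dots> \<le> 2 * real v powr (1-\<alpha>)" using sum_max_bound[OF assms(2)] al2 by auto
  finally show ?thesis .
qed

definition Nul where "Nul n = {w \<in> space M. \<not> good n w}"

lemma Nul_eq: "Nul n = (\<Union>i\<in>{..<K}. \<Union>k\<in>{1..n}. nx i k -` (UNIV - S) \<inter> space M)"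
  unfolding Nul_def good_def by auto

lemma nx_pre_meas: "i < K \<Longrightarrow> k \<ge> 1 \<Longrightarrow> nx i k -` (UNIV - S) \<inter> space M \<in> sets M"
  using measurable_sets[OF nxm, of i k "UNIV - S"] by auto

lemma Nul_meas: "Nul n \<in> sets M"
  unfolding Nul_eq by (intro sets.finite_UN finite_lessThan finite_atLeastAtMost ballI nx_pre_meas) auto

lemma Nul_prob: "measure M (Nul n) = 0"
proof -
  have z: "measure M (nx i k -` (UNIV - S) \<inter> space M) = 0" if "i < K" "k \<in> {1..n}" for i k
  proof -
    have "measure M (nx i k -` (UNIV - S) \<inter> space M) = measure (distr M (count_space UNIV) (nx i k)) (UNIV - S)"
      using nxm that by (subst measure_distr) auto
    also have "\<dots> = measure (measure_pmf (P i)) (UNIV - S)" using nxd that by simp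
    also have "\<dots> = 0" using setP[OF that(1)] by (subst measure_pmf_zero_iff) auto
    finally show ?thesis .
  qed
  have "measure M (Nul n) \<le> (\<Sum>i\<in>{..<K}. measure M (\<Union>k\<in>{1..n}. nx i k -` (UNIV - S) \<inter> space M))"
    unfolding Nul_eq by (intro finite_measure_subadditive_finite) (auto intro!: sets.finite_UN nx_pre_meas simp del: UN_simps)
  also have "\<dots> \<le> (\<Sum>i\<in>{..<K}. \<Sum>k\<in>{1..n}. measure M (nx i k -` (UNIV - S) \<inter> space M))"
    using nx_pre_meas by (intro sum_mono finite_measure_subadditive_finite) auto
  also have "\<dots> = 0" using z by simp
  finally show ?thesis using measure_nonneg[of M "Nul n"] by linarith
qed

end



lemma aux4: "(t::real) = a + b + c + 1 \<Longrightarrow> 0 \<le> a \<Longrightarrow> 0 < b \<Longrightarrow> 0 \<le> c \<Longrightarrow> 1 < t \<and> a \<le> t \<and> b + c \<le> t"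
  by auto

lemma dyadic_pw:
  fixes y p :: real and N :: nat
  assumes p: "p > 0" and y: "\<bar>y\<bar> < 2^N * p"
  shows "\<bar>y\<bar> \<le> p + (\<Sum>k<N. 2^(k+1) * p * (if 2^k * p \<le> \<bar>y\<bar> then 1 else 0))"
  using y
proof (induction N)
  case 0 then show ?case by simp
next
  case (Suc N)
  have nn: "0 \<le> (\<Sum>k<N. 2^(k+1) * p * (if 2^k * p \<le> \<bar>y\<bar> then 1 else 0))"
    using p by (intro sum_nonneg) auto
  show ?case
  proof (cases "\<bar>y\<bar> < 2^N * p")
    case True
    then show ?thesis using Suc.IH p by simp
  next
    case False
    then have "\<bar>y\<bar> \<le> 2^(N+1) * p" using Suc.prems by simp
    then show ?thesis using False nn p by simp
  qed
qed

lemma set_ge_meas: "(f :: 'a \<Rightarrow> real) \<in> borel_measurable M \<Longrightarrow> {w \<in> space M. c \<le> f w} \<in> sets M"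
  by measurable
lemma set_le_meas: "(f :: 'a \<Rightarrow> real) \<in> borel_measurable M \<Longrightarrow> {w \<in> space M. f w \<le> c} \<in> sets M"
  by measurable

lemma abs_split_sub: "{w \<in> space M. (a::real) * b \<le> \<bar>f w\<bar>} \<subseteq> {w \<in> space M. b * a \<le> f w} \<union> {w \<in> space M. f w \<le> - (b * a)}"
  by (auto simp: abs_le_iff mult.commute)

lemma geo_le: fixes r :: real assumes "0 \<le> r" "r < 1" shows "(\<Sum>k<N. r^k) \<le> 1 / (1 - r)"
proof -
  have "(\<Sum>k<N. r^k) = (1 - r^N) / (1 - r)" using assms sum_gp_strict[of r N] by simp
  also have "\<dots> \<le> 1 / (1 - r)" using assms by (intro divide_right_mono) auto
  finally show ?thesis .
qed

context ctx2 begin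

interpretation prob_space M by (rule PS)

abbreviation "Lm \<equiv> Lam \<beta> (Rc + Rx)"
abbreviation "kp \<equiv> kap \<beta> (Rc + Rx) K"
abbreviation "z0 \<equiv> z0c \<beta> (Rc + Rx) K \<theta>L \<xi> \<eta> \<Delta>min"
abbreviation "thp \<equiv> thP \<beta> (Rc + Rx) \<xi> \<eta> \<alpha> \<theta>L \<Delta>min K"

lemma gRx: "\<gamma> * Rx \<le> Rx" "0 \<le> \<gamma> * Rx"
  using gle gpos Rx_nn mult_right_mono[of \<gamma> 1 Rx] by auto

lemma rh_R: "good n w \<Longrightarrow> i < K \<Longrightarrow> 1 \<le> m \<Longrightarrow> m \<le> n \<Longrightarrow> \<bar>rh i m w\<bar> \<le> Rc + Rx"
  using rho_arm_bounds[of n w i m] cb[of i] gRx by (simp add: abs_le_iff)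

lemma mu_R: "i < K \<Longrightarrow> \<bar>mu i\<bar> \<le> Rc + Rx"
  using mu_arm_bounds[of i] cb[of i] gRx by (simp add: abs_le_iff)

lemma L0_gt: "L0 > Rc + Rx"
proof -
  have "L0 = (Rc + Rx) + (exp (2 * \<beta> * (Rc + Rx)) + 1) / \<beta>" unfolding L0_def using bpos by (simp add: field_simps)
  moreover have "(exp (2 * \<beta> * (Rc + Rx)) + 1) / \<beta> > 0" using bpos by (simp add: add_pos_pos)
  ultimately show ?thesis by linarith
qed

lemma L0_ge: "L0 \<ge> Rc + Rx" using L0_gt by simp

lemma Lm_eq: "Lm = L0 + 3 * (Rc + Rx)" unfolding Lam_def L0_def ..

lemma Lm_pos: "Lm > 0"
proof -
  have "L0 > 0" using L0_gt Rx_nn Rc_nn by linarith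
  then show ?thesis unfolding Lm_eq using Rx_nn Rc_nn by simp
qed

lemma kp_pos: "kp > 0" unfolding kap_def using Lm_pos K2 by simp

abbreviation "W n w \<equiv> (\<Sum>i\<in>{..<K} - {istar}. real (T i n w))"

lemma decomp:
  assumes g: "good n w" and n1: "n \<ge> 1"
  shows "\<bar>(real n * rho_bar K \<beta> \<gamma> S c x nx a n w - real n * mu istar) - (real n * rh istar n w - real n * mu istar)\<bar>
          \<le> Lm * W n w"
proof -
  have w: "w \<in> space M" using g unfolding good_def by auto
  let ?Y = "\<lambda>i. real (T i n w) * (rh i (T i n w) w - mu istar)"
  have sT: "real n = (\<Sum>i<K. real (T i n w))" using sum_T[OF w, of n] by (simp flip: of_nat_sum)
  have sT2: "real n = real (T istar n w) + W n w"
    unfolding sT using istar by (subst sum.remove[of _ istar]) auto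
  have X: "real n * rho_bar K \<beta> \<gamma> S c x nx a n w - real n * mu istar = (\<Sum>i<K. ?Y i)"
  proof -
    have "real n * rho_bar K \<beta> \<gamma> S c x nx a n w = (\<Sum>i<K. real (T i n w) * rh i (T i n w) w)"
      unfolding rho_bar_def using n1 by simp
    moreover have "real n * mu istar = (\<Sum>i<K. real (T i n w) * mu istar)"
      unfolding sT by (simp add: sum_distrib_right)
    ultimately show ?thesis by (simp add: sum_subtractf right_diff_distrib)
  qed
  have X2: "(\<Sum>i<K. ?Y i) = ?Y istar + (\<Sum>i\<in>{..<K} - {istar}. ?Y i)"
    using istar by (subst sum.remove[of _ istar]) auto
  have other: "\<bar>\<Sum>i\<in>{..<K} - {istar}. ?Y i\<bar> \<le> 2 * (Rc + Rx) * W n w"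
  proof -
    have "\<bar>\<Sum>i\<in>{..<K} - {istar}. ?Y i\<bar> \<le> (\<Sum>i\<in>{..<K} - {istar}. \<bar>?Y i\<bar>)" by (rule sum_abs)
    also have "\<dots> \<le> (\<Sum>i\<in>{..<K} - {istar}. 2 * (Rc + Rx) * real (T i n w))"
    proof (rule sum_mono)
      fix i assume i: "i \<in> {..<K} - {istar}"
      show "\<bar>?Y i\<bar> \<le> 2 * (Rc + Rx) * real (T i n w)"
      proof (cases "T i n w = 0")
        case True then show ?thesis by simp
      next
        case False
        have "\<bar>rh i (T i n w) w\<bar> \<le> Rc + Rx" using i False Tarm_le[of i n w] by (intro rh_R[OF g]) auto
        moreover have "\<bar>mu istar\<bar> \<le> Rc + Rx" using mu_R istar by auto
        ultimately have "\<bar>rh i (T i n w) w - mu istar\<bar> \<le> 2 * (Rc + Rx)" by (auto simp: abs_le_iff)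
        then have "real (T i n w) * \<bar>rh i (T i n w) w - mu istar\<bar> \<le> real (T i n w) * (2 * (Rc + Rx))"
          by (intro mult_left_mono) auto
        moreover have "\<bar>?Y i\<bar> = real (T i n w) * \<bar>rh i (T i n w) w - mu istar\<bar>" by (simp add: abs_mult)
        ultimately show ?thesis by (simp add: mult.commute)
      qed
    qed
    also have "\<dots> = 2 * (Rc + Rx) * W n w" by (simp add: sum_distrib_left)
    finally show ?thesis .
  qed
  have star: "\<bar>?Y istar - (real n * rh istar n w - real n * mu istar)\<bar> \<le> (L0 + (Rc + Rx)) * W n w"
  proof -
    have "\<bar>real (T istar n w) * rh istar (T istar n w) w - real n * rh istar n w\<bar> \<le> L0 * W n w"
    proof (cases "T istar n w = 0")
      case True
      have "\<bar>real n * rh istar n w\<bar> \<le> real n * (Rc + Rx)"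
        using rh_R[OF g istar n1 order.refl] by (simp add: abs_mult mult_left_mono)
      also have "\<dots> \<le> real n * L0" using L0_ge by (intro mult_left_mono) auto
      finally show ?thesis using True sT2 by (simp add: mult.commute)
    next
      case False
      have "\<bar>real n * rh istar n w - real (T istar n w) * rh istar (T istar n w) w\<bar> \<le> L0 * (real n - real (T istar n w))"
        using False Tarm_le[of istar n w] by (intro lip_tele[OF g istar]) auto
      then show ?thesis using sT2 by (simp add: abs_minus_commute)
    qed
    moreover have "\<bar>(real n - real (T istar n w)) * mu istar\<bar> \<le> (Rc + Rx) * W n w"
    proof -
      have Wnn: "W n w \<ge> 0" by (simp add: sum_nonneg)
      have "\<bar>(real n - real (T istar n w)) * mu istar\<bar> = W n w * \<bar>mu istar\<bar>" using sT2 Wnn by (simp add: abs_mult)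
      also have "\<dots> \<le> W n w * (Rc + Rx)" using mu_R[OF istar] Wnn by (intro mult_left_mono) auto
      finally show ?thesis by (simp add: mult.commute)
    qed
    ultimately show ?thesis by (simp add: algebra_simps abs_le_iff)
  qed
  have "\<bar>(\<Sum>i<K. ?Y i) - (real n * rh istar n w - real n * mu istar)\<bar> \<le> (L0 + (Rc + Rx)) * W n w + 2 * (Rc + Rx) * W n w"
    using X2 star other by linarith
  also have "\<dots> = Lm * W n w" unfolding Lm_eq by (simp add: algebra_simps)
  finally show ?thesis unfolding X .
qed

lemma card_others: "card ({..<K} - {istar}) = K - 1" using istar by simp

lemma W_bad:
  assumes w: "w \<in> space M" and n1: "n \<ge> 1" and v: "v \<ge> 1"
    and big: "Lm * W n w > Lm * ((real K - 1) * (A * real n powr eta' + real v + 1))"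
  shows "w \<in> BadP istar v n \<union> (\<Union>i\<in>{..<K}. BadM i v n)"
proof -
  have "\<exists>i\<in>{..<K} - {istar}. real (T i n w) \<ge> A * real n powr eta' + real v + 1"
  proof (rule ccontr)
    assume "\<not> ?thesis"
    then have "\<And>i. i \<in> {..<K} - {istar} \<Longrightarrow> real (T i n w) \<le> A * real n powr eta' + real v + 1"
      by (metis linorder_not_le less_imp_le)
    then have "W n w \<le> real (card ({..<K} - {istar})) * (A * real n powr eta' + real v + 1)"
      by (intro sum_bounded_above) auto
    also have "real (card ({..<K} - {istar})) = real K - 1" using card_others K2 by simp
    finally have "Lm * W n w \<le> Lm * ((real K - 1) * (A * real n powr eta' + real v + 1))"
      using Lm_pos by (intro mult_left_mono) auto
    then show False using big by linarith
  qed
  then obtain i where i: "i < K" "i \<noteq> istar" "real (T i n w) \<ge> A * real n powr eta' + real v + 1" by auto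
  from pw[OF w n1 i(1,2) v i(3)] show ?thesis
    unfolding BadP_def BadM_def using w i by blast
qed

lemma z_arith:
  assumes z: "z \<ge> z0" and n1: "n \<ge> 1"
  defines "v \<equiv> nat \<lfloor>z / kp\<rfloor>"
  shows "v \<ge> 1" "real v \<ge> z / (2 * kp)"
    "Lm * ((real K - 1) * (A * real n powr eta' + real v + 1)) \<le> real n powr eta' * z / 2"
proof -
  have kp: "kp > 0" by (rule kp_pos)
  have zk: "z \<ge> kp * (A + 1)" using z unfolding z0c_def by simp
  then have zk2: "z / kp \<ge> A + 1" using kp by (simp add: field_simps)
  then have zk1: "z / kp \<ge> 1" using A_nn by linarith
  show v1: "v \<ge> 1" unfolding v_def using zk1 by (simp add: le_nat_iff)
  have vle: "real v \<le> z / kp" unfolding v_def using zk1 by (simp add: of_nat_nat)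
  show "real v \<ge> z / (2 * kp)"
  proof -
    have "real v = of_int \<lfloor>z / kp\<rfloor>" unfolding v_def using zk1 by simp
    moreover have "of_int \<lfloor>z / kp\<rfloor> > z / kp - 1" by linarith
    moreover have "of_int \<lfloor>z / kp\<rfloor> \<ge> (1::real)" using zk1 by simp
    ultimately have "2 * real v \<ge> z / kp" by linarith
    then show ?thesis using kp by (simp add: field_simps)
  qed
  let ?p = "real n powr eta'"
  have p1: "?p \<ge> 1" using n1 eta'_ge eta_lo by (intro ge_one_powr_ge_zero) auto
  have "A * ?p + real v + 1 \<le> A * ?p + (z / kp) * ?p + ?p"
    using vle p1 zk1 by (smt (verit, ccfv_SIG) mult_cancel_left1 mult_left_mono)
  also have "\<dots> = (A + 1) * ?p + (z / kp) * ?p" by (simp add: algebra_simps)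
  also have "\<dots> \<le> (z / kp) * ?p + (z / kp) * ?p" using zk2 p1 by (intro add_right_mono mult_right_mono) auto
  finally have s: "A * ?p + real v + 1 \<le> 2 * (z / kp) * ?p" by simp
  have K1': "real K - 1 \<ge> 1" using K2 by simp
  have "Lm * ((real K - 1) * (A * ?p + real v + 1)) \<le> Lm * ((real K - 1) * (2 * (z / kp) * ?p))"
    using s Lm_pos K1' by (intro mult_left_mono) auto
  also have "\<dots> = ?p * z / 2" unfolding kap_def using Lm_pos K1' by (simp add: field_simps)
  finally show "Lm * ((real K - 1) * (A * ?p + real v + 1)) \<le> ?p * z / 2" .
qed

lemma thp_eq: "thp = z0 powr (\<alpha> - 1) + \<theta>L * 2 powr \<xi> + 2 * (real K + 1) * (2 * kp) powr (\<alpha> - 1) + 1"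
  unfolding thP_def ..

lemma thp_terms_nn: "0 \<le> z0 powr (\<alpha> - 1)" "0 < \<theta>L * 2 powr \<xi>" "0 \<le> 2 * (real K + 1) * (2 * kp) powr (\<alpha> - 1)"
  using thL1 by auto

lemma thp_facts: "thp > 1" "z0 powr (\<alpha> - 1) \<le> thp" "\<theta>L * 2 powr \<xi> + 2 * (real K + 1) * (2 * kp) powr (\<alpha> - 1) \<le> thp"
  using aux4[OF thp_eq thp_terms_nn] by auto

lemma tail_core:
  assumes n1: "n \<ge> 1" and z: "z \<ge> 1" and E: "E \<subseteq> space M"
    and E'm: "E' \<in> sets M" and E'p: "z \<ge> 2 \<Longrightarrow> measure M E' \<le> \<theta>L / (z/2) powr \<xi>"
    and cover: "\<And>w v. w \<in> E \<Longrightarrow> good n w \<Longrightarrow>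
        Lm * ((real K - 1) * (A * real n powr eta' + real v + 1)) \<le> real n powr eta' * z / 2 \<Longrightarrow>
        w \<in> E' \<or> Lm * W n w > Lm * ((real K - 1) * (A * real n powr eta' + real v + 1))"
  shows "measure M E \<le> thp / z powr (\<alpha> - 1)"
proof -
  have q: "z powr (\<alpha> - 1) > 0" using z by simp
  show ?thesis
  proof (cases "z < z0")
    case True
    have "1 \<le> (z0 / z) powr (\<alpha> - 1)" using True z al2 by (intro ge_one_powr_ge_zero) auto
    also have "\<dots> = z0 powr (\<alpha> - 1) / z powr (\<alpha> - 1)" by (rule powr_divide)
    also have "\<dots> \<le> thp / z powr (\<alpha> - 1)"
    proof (rule divide_right_mono)
      show "z0 powr (\<alpha> - 1) \<le> thp" using thp_facts by simp
    qed (use q in auto)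
    finally show ?thesis using prob_le_1[of E] by linarith
  next
    case False
    then have z0z: "z \<ge> z0" by simp
    have z2: "z \<ge> 2" using z0z unfolding z0c_def by simp
    define v where "v = nat \<lfloor>z / kp\<rfloor>"
    have v1: "v \<ge> 1" and vz: "real v \<ge> z / (2 * kp)"
      and ar: "Lm * ((real K - 1) * (A * real n powr eta' + real v + 1)) \<le> real n powr eta' * z / 2"
      using z_arith[OF z0z n1] unfolding v_def by auto
    have sub: "E \<subseteq> Nul n \<union> E' \<union> (BadP istar v n \<union> (\<Union>i\<in>{..<K}. BadM i v n))"
    proof
      fix w assume w: "w \<in> E"
      show "w \<in> Nul n \<union> E' \<union> (BadP istar v n \<union> (\<Union>i\<in>{..<K}. BadM i v n))"
      proof (cases "good n w")
        case False then show ?thesis using w E unfolding Nul_def by auto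
      next
        case True
        from cover[OF w True ar] have "w \<in> E' \<or> Lm * W n w > Lm * ((real K - 1) * (A * real n powr eta' + real v + 1))" .
        then show ?thesis using W_bad[OF _ n1 v1] w E by blast
      qed
    qed
    have mUN: "(\<Union>i\<in>{..<K}. BadM i v n) \<in> sets M" using BadM_meas by auto
    have "measure M E \<le> measure M (Nul n \<union> E' \<union> (BadP istar v n \<union> (\<Union>i\<in>{..<K}. BadM i v n)))"
      using sub Nul_meas E'm BadP_meas[OF istar] mUN by (intro finite_measure_mono) auto
    also have "\<dots> \<le> measure M (Nul n \<union> E') + measure M (BadP istar v n \<union> (\<Union>i\<in>{..<K}. BadM i v n))"
      using Nul_meas E'm BadP_meas[OF istar] mUN by (intro measure_Un_le) auto
    also have "measure M (Nul n \<union> E') \<le> measure M (Nul n) + measure M E'"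
      using Nul_meas E'm by (intro measure_Un_le) auto
    also have "measure M (BadP istar v n \<union> (\<Union>i\<in>{..<K}. BadM i v n)) \<le> measure M (BadP istar v n) + measure M (\<Union>i\<in>{..<K}. BadM i v n)"
      using BadP_meas[OF istar] mUN by (intro measure_Un_le) auto
    also have "measure M (\<Union>i\<in>{..<K}. BadM i v n) \<le> (\<Sum>i\<in>{..<K}. measure M (BadM i v n))"
      using BadM_meas by (intro finite_measure_subadditive_finite) auto
    also have "\<dots> \<le> (\<Sum>i\<in>{..<K}. 2 * real v powr (1 - \<alpha>))"
      using BadM_prob[OF _ v1] by (intro sum_mono) auto
    finally have m1: "measure M E \<le> measure M E' + 2 * real v powr (1 - \<alpha>) + real K * (2 * real v powr (1 - \<alpha>))"
      using Nul_prob BadP_prob[OF istar v1, of n] by simp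
    have b1: "measure M E' \<le> \<theta>L * 2 powr \<xi> / z powr (\<alpha> - 1)"
    proof -
      have "measure M E' \<le> \<theta>L / (z/2) powr \<xi>" using E'p z2 by simp
      also have "\<dots> = \<theta>L * 2 powr \<xi> / z powr \<xi>" by (simp add: powr_divide)
      also have "\<dots> \<le> \<theta>L * 2 powr \<xi> / z powr (\<alpha> - 1)"
        using z q al_hi eta_lo eta_hi thL1 xi1
        by (intro divide_left_mono powr_mono mult_pos_pos) (auto simp: mult_less_cancel_left1 intro: order.trans[of _ "\<xi> * (1 - \<eta>)"])
      finally show ?thesis .
    qed
    have b2: "real v powr (1 - \<alpha>) \<le> (2 * kp) powr (\<alpha> - 1) / z powr (\<alpha> - 1)"
    proof -
      have "real v powr (1 - \<alpha>) \<le> (z / (2 * kp)) powr (1 - \<alpha>)"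
        using vz al2 z kp_pos by (intro powr_mono2') auto
      also have "\<dots> = (2 * kp) powr (\<alpha> - 1) / z powr (\<alpha> - 1)"
        using powr_minus_divide[of "z / (2 * kp)" "\<alpha> - 1"] by (simp add: powr_divide)
      finally show ?thesis .
    qed
    have "measure M E \<le> \<theta>L * 2 powr \<xi> / z powr (\<alpha> - 1) + (2 + 2 * real K) * ((2 * kp) powr (\<alpha> - 1) / z powr (\<alpha> - 1))"
      using m1 b1 mult_left_mono[OF b2, of "2 + 2 * real K"] by (simp add: algebra_simps)
    also have "\<dots> = (\<theta>L * 2 powr \<xi> + 2 * (real K + 1) * (2 * kp) powr (\<alpha> - 1)) / z powr (\<alpha> - 1)"
      by (simp add: add_divide_distrib algebra_simps)
    also have "\<dots> \<le> thp / z powr (\<alpha> - 1)"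
    proof (rule divide_right_mono)
      show "\<theta>L * 2 powr \<xi> + 2 * (real K + 1) * (2 * kp) powr (\<alpha> - 1) \<le> thp"
        using thp_facts by simp
    qed (use q in auto)
    finally show ?thesis .
  qed
qed

abbreviation "Xn n w \<equiv> real n * rho_bar K \<beta> \<gamma> S c x nx a n w - real n * mu istar"

lemma pow_le: "n \<ge> 1 \<Longrightarrow> real n powr \<eta> \<le> real n powr eta'"
  using eta'_ge by (intro powr_mono) auto

lemma tail_upper: assumes n1: "n \<ge> 1" and z: "z \<ge> 1"
  shows "measure M {w \<in> space M. Xn n w \<ge> real n powr eta' * z} \<le> thp / z powr (\<alpha> - 1)"
proof (rule tail_core[OF n1 z, where E'="{w \<in> space M. real n * rh istar n w - real n * mu istar \<ge> real n powr \<eta> * (z/2)}"])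
  show "{w \<in> space M. real n * rh istar n w - real n * mu istar \<ge> real n powr \<eta> * (z/2)} \<in> sets M"
    using istar by measurable
  show "measure M {w \<in> space M. real n * rh istar n w - real n * mu istar \<ge> real n powr \<eta> * (z/2)} \<le> \<theta>L / (z/2) powr \<xi>"
    if "z \<ge> 2" using thL[OF istar _ n1, of "z/2"] that by auto
  fix w v assume w: "w \<in> {w \<in> space M. Xn n w \<ge> real n powr eta' * z}" and g: "good n w"
    and ar: "Lm * ((real K - 1) * (A * real n powr eta' + real v + 1)) \<le> real n powr eta' * z / 2"
  have d: "\<bar>Xn n w - (real n * rh istar n w - real n * mu istar)\<bar> \<le> Lm * W n w" using decomp[OF g n1] .
  show "w \<in> {w \<in> space M. real n * rh istar n w - real n * mu istar \<ge> real n powr \<eta> * (z/2)} \<or>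
        Lm * W n w > Lm * ((real K - 1) * (A * real n powr eta' + real v + 1))"
  proof (cases "real n * rh istar n w - real n * mu istar \<ge> real n powr \<eta> * (z/2)")
    case True then show ?thesis using w by auto
  next
    case False
    have "real n powr \<eta> * (z/2) \<le> real n powr eta' * (z/2)" using pow_le[OF n1] z by (intro mult_right_mono) auto
    then show ?thesis using False d w ar by (auto simp: abs_le_iff)
  qed
qed auto

lemma tail_lower: assumes n1: "n \<ge> 1" and z: "z \<ge> 1"
  shows "measure M {w \<in> space M. Xn n w \<le> - (real n powr eta' * z)} \<le> thp / z powr (\<alpha> - 1)"
proof (rule tail_core[OF n1 z, where E'="{w \<in> space M. real n * rh istar n w - real n * mu istar \<le> - (real n powr \<eta> * (z/2))}"])
  show "{w \<in> space M. real n * rh istar n w - real n * mu istar \<le> - (real n powr \<eta> * (z/2))} \<in> sets M"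
    using istar by measurable
  show "measure M {w \<in> space M. real n * rh istar n w - real n * mu istar \<le> - (real n powr \<eta> * (z/2))} \<le> \<theta>L / (z/2) powr \<xi>"
    if "z \<ge> 2" using thL[OF istar _ n1, of "z/2"] that by auto
  fix w v assume w: "w \<in> {w \<in> space M. Xn n w \<le> - (real n powr eta' * z)}" and g: "good n w"
    and ar: "Lm * ((real K - 1) * (A * real n powr eta' + real v + 1)) \<le> real n powr eta' * z / 2"
  have d: "\<bar>Xn n w - (real n * rh istar n w - real n * mu istar)\<bar> \<le> Lm * W n w" using decomp[OF g n1] .
  show "w \<in> {w \<in> space M. real n * rh istar n w - real n * mu istar \<le> - (real n powr \<eta> * (z/2))} \<or>
        Lm * W n w > Lm * ((real K - 1) * (A * real n powr eta' + real v + 1))"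
  proof (cases "real n * rh istar n w - real n * mu istar \<le> - (real n powr \<eta> * (z/2))")
    case True then show ?thesis using w by auto
  next
    case False
    have "real n powr \<eta> * (z/2) \<le> real n powr eta' * (z/2)" using pow_le[OF n1] z by (intro mult_right_mono) auto
    then show ?thesis using False d w ar by (auto simp: abs_le_iff)
  qed
qed auto

lemma am: "a t \<in> measurable M (count_space UNIV)" using pol unfolding ucb_policy_def by auto

lemma Tarm_meas: "(\<lambda>w. T i n w) \<in> measurable M (count_space UNIV)"
  unfolding Tarm_def
proof (rule measurable_card)
  fix t
  have [measurable]: "a t \<in> measurable M (count_space UNIV)" for t by (rule am)
  show "{w \<in> space M. t \<in> {t \<in> {1..n}. a t w = i}} \<in> sets M" by measurable
qed

lemma rho_bar_meas: "rho_bar K \<beta> \<gamma> S c x nx a n \<in> borel_measurable M"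
proof -
  have [measurable]: "(\<lambda>w. rh i (T i n w) w) \<in> borel_measurable M" if "i < K" for i
    by (rule measurable_compose_countable[OF rho_arm_meas[OF that] Tarm_meas])
  have [measurable]: "(\<lambda>w. real (T i n w)) \<in> borel_measurable M" for i
    using Tarm_meas by (rule measurable_compose) simp
  show ?thesis unfolding rho_bar_def[abs_def] by measurable
qed

lemma Xn_meas: "Xn n \<in> borel_measurable M"
  using rho_bar_meas by measurable

lemma AE_good: "AE w in M. good n w"
proof (rule AE_I')
  show "Nul n \<in> null_sets M" using Nul_meas Nul_prob by (simp add: null_sets_def emeasure_eq_measure)
  show "{w \<in> space M. \<not> good n w} \<subseteq> Nul n" unfolding Nul_def by auto
qed

lemma Xn_bound: assumes "good n w" "n \<ge> 1" shows "\<bar>Xn n w\<bar> \<le> (Lm + 2 * (Rc + Rx)) * real n"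
proof -
  have d: "\<bar>Xn n w - (real n * rh istar n w - real n * mu istar)\<bar> \<le> Lm * W n w" using decomp[OF assms] .
  have w: "w \<in> space M" using assms unfolding good_def by auto
  have "W n w \<le> (\<Sum>i<K. real (T i n w))" by (intro sum_mono2) auto
  also have "\<dots> = real n" using sum_T[OF w, of n] by (simp flip: of_nat_sum)
  finally have Wn: "Lm * W n w \<le> Lm * real n" using Lm_pos by (intro mult_left_mono) auto
  have "\<bar>rh istar n w\<bar> \<le> Rc + Rx" using rh_R[OF assms(1) istar assms(2) order.refl] .
  then have "\<bar>real n * rh istar n w\<bar> \<le> real n * (Rc + Rx)" by (simp add: abs_mult mult_left_mono)
  moreover have "\<bar>real n * mu istar\<bar> \<le> real n * (Rc + Rx)" using mu_R[OF istar] by (simp add: abs_mult mult_left_mono)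
  ultimately show ?thesis using d Wn by (simp add: abs_le_iff algebra_simps)
qed

lemma Xn_int: "n \<ge> 1 \<Longrightarrow> integrable M (Xn n)"
  using AE_good[of n] Xn_bound Xn_meas by (intro integrable_const_bound[where B="(Lm + 2 * (Rc + Rx)) * real n"]) (auto elim: AE_mp)

abbreviation "qq \<equiv> 2 powr (2 - \<alpha>)"

lemma qq: "0 \<le> qq" "qq < 1"
proof -
  show "0 \<le> qq" by simp
  have "2 powr (2 - \<alpha>) < 2 powr 0" using al2 by (intro powr_less_mono) auto
  then show "qq < 1" by simp
qed

lemma pow2k: "((2::real)^k) powr (\<alpha> - 1) = 2 powr (real k * (\<alpha> - 1))"
  and qq2k: "qq^k / 2^k = 1 / 2 powr (real k * (\<alpha> - 1))"
proof -
  have a: "(2::real)^k = 2 powr real k" by (simp add: powr_realpow)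
  show "((2::real)^k) powr (\<alpha> - 1) = 2 powr (real k * (\<alpha> - 1))" unfolding a by (rule powr_powr)
  have b: "qq^k = 2 powr (real k * (2 - \<alpha>))" by (rule powr_power) simp
  have "qq^k / 2^k = 2 powr (real k * (2 - \<alpha>) - real k)" unfolding a b by (rule powr_diff[symmetric])
  also have "real k * (2 - \<alpha>) - real k = - (real k * (\<alpha> - 1))" by (simp add: algebra_simps)
  also have "2 powr (- (real k * (\<alpha> - 1))) = 1 / 2 powr (real k * (\<alpha> - 1))" by (rule powr_minus_divide)
  finally show "qq^k / 2^k = 1 / 2 powr (real k * (\<alpha> - 1))" .
qed

lemma Ek_prob: assumes n1: "n \<ge> 1"
  shows "measure M {w \<in> space M. 2^k * real n powr eta' \<le> \<bar>Xn n w\<bar>} \<le> 2 * thp * (qq^k / 2^k)"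
proof -
  define f where "f = Xn n"
  define p where "p = real n powr eta'"
  let ?z = "(2::real)^k"
  have z1: "?z \<ge> 1" by simp
  have fm: "f \<in> borel_measurable M" unfolding f_def by (rule Xn_meas)
  have tu: "measure M {w \<in> space M. p * ?z \<le> f w} \<le> thp / ?z powr (\<alpha> - 1)"
    unfolding f_def p_def by (rule tail_upper[OF n1 z1])
  have tl: "measure M {w \<in> space M. f w \<le> - (p * ?z)} \<le> thp / ?z powr (\<alpha> - 1)"
    unfolding f_def p_def by (rule tail_lower[OF n1 z1])
  have mU: "{w \<in> space M. p * ?z \<le> f w} \<in> sets M" by (rule set_ge_meas[OF fm])
  have mL: "{w \<in> space M. f w \<le> - (p * ?z)} \<in> sets M" by (rule set_le_meas[OF fm])
  have "measure M {w \<in> space M. ?z * p \<le> \<bar>f w\<bar>} \<le> measure M ({w \<in> space M. p * ?z \<le> f w} \<union> {w \<in> space M. f w \<le> - (p * ?z)})"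
    by (rule finite_measure_mono[OF abs_split_sub sets.Un[OF mU mL]])
  also have "\<dots> \<le> measure M {w \<in> space M. p * ?z \<le> f w} + measure M {w \<in> space M. f w \<le> - (p * ?z)}"
    by (rule measure_Un_le[OF mU mL])
  also have "\<dots> \<le> thp / ?z powr (\<alpha> - 1) + thp / ?z powr (\<alpha> - 1)"
    using tu tl by (rule add_mono)
  also have "\<dots> = 2 * thp * (qq^k / 2^k)" unfolding pow2k qq2k by simp
  finally show ?thesis unfolding f_def p_def .
qed

lemma E_abs: assumes n1: "n \<ge> 1"
  shows "integral\<^sup>L M (\<lambda>w. \<bar>Xn n w\<bar>) \<le> real n powr eta' * (1 + 4 * thp / (1 - qq))"
proof -
  define f where "f = Xn n"
  define p where "p = real n powr eta'"
  have p1: "p \<ge> 1" unfolding p_def using n1 eta'_ge eta_lo by (intro ge_one_powr_ge_zero) auto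
  have fm: "f \<in> borel_measurable M" unfolding f_def by (rule Xn_meas)
  have fi: "integrable M f" unfolding f_def using Xn_int[OF n1] .
  define Bd where "Bd = (Lm + 2 * (Rc + Rx)) * real n"
  define N where "N = nat \<lceil>Bd\<rceil> + 1"
  define E where "E k = {w \<in> space M. 2^k * p \<le> \<bar>f w\<bar>}" for k :: nat
  have Em: "E k \<in> sets M" for k unfolding E_def using fm by (intro set_ge_meas) measurable
  have EP: "measure M (E k) \<le> 2 * thp * (qq^k / 2^k)" for k
    unfolding E_def f_def p_def using Ek_prob[OF n1] .
  have BN: "Bd < 2^N"
  proof -
    have "Bd < real N" unfolding N_def by linarith
    also have "real N < 2^N" using less_exp[of N] by (metis of_nat_less_iff of_nat_numeral of_nat_power)
    finally show ?thesis .
  qed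
  have pw: "AE w in M. \<bar>f w\<bar> \<le> p + (\<Sum>k<N. 2^(k+1) * p * indicator (E k) w)"
    using AE_good[of n]
  proof (rule AE_mp, intro AE_I2 impI)
    fix w assume w: "w \<in> space M" and g: "good n w"
    have "\<bar>f w\<bar> \<le> Bd" unfolding f_def Bd_def using Xn_bound[OF g n1] .
    also have "Bd < 2^N * 1" using BN by simp
    also have "2^N * 1 \<le> 2^N * p" using p1 by (intro mult_left_mono) auto
    finally have "\<bar>f w\<bar> \<le> p + (\<Sum>k<N. 2^(k+1) * p * (if 2^k * p \<le> \<bar>f w\<bar> then 1 else 0))"
      using p1 by (intro dyadic_pw) auto
    also have "(\<Sum>k<N. 2^(k+1) * p * (if 2^k * p \<le> \<bar>f w\<bar> then 1 else 0)) = (\<Sum>k<N. 2^(k+1) * p * indicator (E k) w)"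
      unfolding E_def using w by (intro sum.cong) (auto simp: indicator_def)
    finally show "\<bar>f w\<bar> \<le> p + (\<Sum>k<N. 2^(k+1) * p * indicator (E k) w)" .
  qed
  have int_ind: "integrable M (\<lambda>w. 2^(k+1) * p * indicator (E k) w :: real)" for k
    using Em by (intro integrable_mult_right integrable_real_indicator) (auto simp: emeasure_eq_measure)
  have "integral\<^sup>L M (\<lambda>w. \<bar>f w\<bar>) \<le> integral\<^sup>L M (\<lambda>w. p + (\<Sum>k<N. 2^(k+1) * p * indicator (E k) w))"
  proof (rule integral_mono_AE[OF _ _ pw])
    show "integrable M (\<lambda>w. \<bar>f w\<bar>)" using fi by (rule integrable_abs)
    have "integrable M (\<lambda>w. \<Sum>k<N. 2^(k+1) * p * indicator (E k) w :: real)"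
      by (rule Bochner_Integration.integrable_sum) (rule int_ind)
    then show "integrable M (\<lambda>w. p + (\<Sum>k<N. 2^(k+1) * p * indicator (E k) w))"
      by (rule Bochner_Integration.integrable_add[OF integrable_const])
  qed
  also have "\<dots> = p + (\<Sum>k<N. 2^(k+1) * p * measure M (E k))"
  proof -
    have "integral\<^sup>L M (\<lambda>w. p + (\<Sum>k<N. 2^(k+1) * p * indicator (E k) w)) =
          integral\<^sup>L M (\<lambda>w. p) + integral\<^sup>L M (\<lambda>w. \<Sum>k<N. 2^(k+1) * p * indicator (E k) w)"
      by (rule Bochner_Integration.integral_add[OF integrable_const Bochner_Integration.integrable_sum]) (rule int_ind)
    also have "integral\<^sup>L M (\<lambda>w. \<Sum>k<N. 2^(k+1) * p * indicator (E k) w) = (\<Sum>k<N. integral\<^sup>L M (\<lambda>w. 2^(k+1) * p * indicator (E k) w))"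
      by (rule Bochner_Integration.integral_sum) (rule int_ind)
    also have "\<dots> = (\<Sum>k<N. 2^(k+1) * p * measure M (E k))"
      using Em by (intro sum.cong refl) (simp add: sets.Int_space_eq2)
    finally show ?thesis by (simp add: prob_space)
  qed
  also have "\<dots> \<le> p + (\<Sum>k<N. 2^(k+1) * p * (2 * thp * (qq^k / 2^k)))"
    using EP p1 by (intro add_left_mono sum_mono mult_left_mono) auto
  also have "p + (\<Sum>k<N. 2^(k+1) * p * (2 * thp * (qq^k / 2^k))) = p + 4 * p * thp * (\<Sum>k<N. qq^k)"
    by (simp add: sum_distrib_left field_simps)
  also have "\<dots> \<le> p + 4 * p * thp * (1 / (1 - qq))"
    using geo_le[OF qq] p1 thp_facts by (intro add_left_mono mult_left_mono) auto
  also have "p + 4 * p * thp * (1 / (1 - qq)) = p * (1 + 4 * thp / (1 - qq))" by (simp add: field_simps)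
  finally show ?thesis unfolding f_def p_def .
qed

lemma part1: assumes n1: "n \<ge> 1"
  shows "\<bar>mu istar - integral\<^sup>L M (rho_bar K \<beta> \<gamma> S c x nx a n)\<bar> \<le> (1 + 4 * thp / (1 - qq)) * real n powr (eta' - 1)"
proof -
  have np: "real n > 0" using n1 by simp
  have "integral\<^sup>L M (rho_bar K \<beta> \<gamma> S c x nx a n) = integral\<^sup>L M (\<lambda>w. Xn n w / real n + mu istar)"
    by (rule Bochner_Integration.integral_cong) (use np in \<open>simp_all add: field_simps\<close>)
  also have "\<dots> = integral\<^sup>L M (Xn n) / real n + mu istar"
  proof -
    have i1: "integrable M (\<lambda>w. Xn n w / real n)" using Xn_int[OF n1] by auto
    have "integral\<^sup>L M (\<lambda>w. Xn n w / real n + mu istar) = integral\<^sup>L M (\<lambda>w. Xn n w / real n) + integral\<^sup>L M (\<lambda>w. mu istar)"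
      by (rule Bochner_Integration.integral_add[OF i1 integrable_const])
    then show ?thesis by (simp add: prob_space)
  qed
  finally have "\<bar>mu istar - integral\<^sup>L M (rho_bar K \<beta> \<gamma> S c x nx a n)\<bar> = \<bar>integral\<^sup>L M (Xn n)\<bar> / real n"
    using np by (simp add: abs_divide)
  also have "\<dots> \<le> integral\<^sup>L M (\<lambda>w. \<bar>Xn n w\<bar>) / real n"
    using np by (intro divide_right_mono integral_abs_bound) auto
  also have "\<dots> \<le> real n powr eta' * (1 + 4 * thp / (1 - qq)) / real n"
    using np E_abs[OF n1] by (intro divide_right_mono) auto
  also have "\<dots> = (1 + 4 * thp / (1 - qq)) * real n powr (eta' - 1)"
    using np by (simp add: powr_diff)
  finally show ?thesis .
qed

end



theorem theorem4:
  fixes \<beta> R \<xi> \<eta> \<alpha> \<theta>L \<Delta>min :: real and K :: nat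
  assumes "\<beta> > 0" and "\<xi> > 1" and "1/2 \<le> \<eta>" and "\<eta> < 1" and "\<alpha> > 2"
    and "\<xi> * \<eta> * (1 - \<eta>) \<le> \<alpha>" and "\<alpha> < \<xi> * (1 - \<eta>)"
    and "\<theta>L > 1" and "K \<ge> 2"
  shows "\<exists>C \<theta>'. \<theta>' > 1 \<and>
    (\<forall>(M :: 'w measure) S Rc Rx \<gamma> \<theta> c P x mu_s nx a istar.
       Rc + Rx = R \<longrightarrow> \<theta> > 1 \<longrightarrow>
       nd_bandit M K S Rc Rx \<beta> \<gamma> \<theta> \<xi> \<eta> c P x mu_s nx \<longrightarrow>
       (\<forall>i<K. \<forall>z::real. \<forall>n::nat. z \<ge> 1 \<longrightarrow> n \<ge> 1 \<longrightarrow>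
          measure M {w \<in> space M. real n * rho_arm \<beta> \<gamma> S c x nx i n w
                          - real n * mu_arm \<beta> \<gamma> c P mu_s i \<ge> real n powr \<eta> * z} \<le> \<theta>L / z powr \<xi> \<and>
          measure M {w \<in> space M. real n * rho_arm \<beta> \<gamma> S c x nx i n w
                          - real n * mu_arm \<beta> \<gamma> c P mu_s i \<le> - (real n powr \<eta> * z)} \<le> \<theta>L / z powr \<xi>) \<longrightarrow>
       istar < K \<longrightarrow>
       (\<forall>i<K. i \<noteq> istar \<longrightarrow> mu_arm \<beta> \<gamma> c P mu_s istar < mu_arm \<beta> \<gamma> c P mu_s i) \<longrightarrow>
       \<Delta>min = Min ((\<lambda>i. mu_arm \<beta> \<gamma> c P mu_s i - mu_arm \<beta> \<gamma> c P mu_s istar) ` ({..<K} - {istar})) \<longrightarrow>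
       ucb_policy M K \<beta> \<gamma> S c x nx \<theta>L \<xi> \<alpha> \<eta> a \<longrightarrow>
       (let \<mu>star = mu_arm \<beta> \<gamma> c P mu_s istar;
            \<rho>bar = rho_bar K \<beta> \<gamma> S c x nx a;
            \<eta>' = \<alpha> / (\<xi> * (1 - \<eta>));
            \<xi>' = \<alpha> - 1
        in (\<forall>n::nat. n \<ge> 1 \<longrightarrow>
              \<bar>\<mu>star - integral\<^sup>L M (\<rho>bar n)\<bar> \<le> C * exp (2 * \<beta> * R) * real n powr (\<eta>' - 1)) \<and>
           ((\<lambda>n. integral\<^sup>L M (\<rho>bar n)) \<longlonglongrightarrow> \<mu>star) \<and>
           (\<forall>z::real. \<forall>n::nat. z \<ge> 1 \<longrightarrow> n \<ge> 1 \<longrightarrow>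
              measure M {w \<in> space M. real n * \<rho>bar n w - real n * \<mu>star \<ge> real n powr \<eta>' * z}
                \<le> \<theta>' / z powr \<xi>' \<and>
              measure M {w \<in> space M. real n * \<rho>bar n w - real n * \<mu>star \<le> - (real n powr \<eta>' * z)}
                \<le> \<theta>' / z powr \<xi>')))"
proof -
  define th' where "th' = thP \<beta> R \<xi> \<eta> \<alpha> \<theta>L \<Delta>min K"
  define C where "C = 1 + 4 * th' / (1 - 2 powr (2 - \<alpha>))"
  have th'1: "th' > 1"
  proof -
    have a: "0 \<le> z0c \<beta> R K \<theta>L \<xi> \<eta> \<Delta>min powr (\<alpha> - 1)" by simp
    have b: "0 < \<theta>L * 2 powr \<xi>" using assms by simp
    have c: "0 \<le> 2 * (real K + 1) * (2 * kap \<beta> R K) powr (\<alpha> - 1)" by simp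
    have e: "th' = z0c \<beta> R K \<theta>L \<xi> \<eta> \<Delta>min powr (\<alpha> - 1) + \<theta>L * 2 powr \<xi> + 2 * (real K + 1) * (2 * kap \<beta> R K) powr (\<alpha> - 1) + 1"
      unfolding th'_def thP_def ..
    show ?thesis using aux4[OF e a b c] by simp
  qed
  have qq1: "2 powr (2 - \<alpha>) < (1::real)"
  proof -
    have "(2::real) powr (2 - \<alpha>) < 2 powr 0" using assms by (intro powr_less_mono) auto
    then show ?thesis by simp
  qed
  have C0: "C \<ge> 0" unfolding C_def using th'1 qq1 by simp
  show ?thesis
  proof (rule exI[of _ C], rule exI[of _ th'], intro conjI th'1 allI impI)
    fix M :: "'w measure" and S Rc Rx \<gamma> \<theta> c P x mu_s nx a istar
    assume R: "Rc + Rx = R" and th: "\<theta> > 1" and nd: "nd_bandit M K S Rc Rx \<beta> \<gamma> \<theta> \<xi> \<eta> c P x mu_s nx"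
      and thL: "\<forall>i<K. \<forall>z::real. \<forall>n::nat. z \<ge> 1 \<longrightarrow> n \<ge> 1 \<longrightarrow>
          measure M {w \<in> space M. real n * rho_arm \<beta> \<gamma> S c x nx i n w
                          - real n * mu_arm \<beta> \<gamma> c P mu_s i \<ge> real n powr \<eta> * z} \<le> \<theta>L / z powr \<xi> \<and>
          measure M {w \<in> space M. real n * rho_arm \<beta> \<gamma> S c x nx i n w
                          - real n * mu_arm \<beta> \<gamma> c P mu_s i \<le> - (real n powr \<eta> * z)} \<le> \<theta>L / z powr \<xi>"
      and istar: "istar < K"
      and opt: "\<forall>i<K. i \<noteq> istar \<longrightarrow> mu_arm \<beta> \<gamma> c P mu_s istar < mu_arm \<beta> \<gamma> c P mu_s i"
      and Dm: "\<Delta>min = Min ((\<lambda>i. mu_arm \<beta> \<gamma> c P mu_s i - mu_arm \<beta> \<gamma> c P mu_s istar) ` ({..<K} - {istar}))"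
      and pol: "ucb_policy M K \<beta> \<gamma> S c x nx \<theta>L \<xi> \<alpha> \<eta> a"
    interpret ctx2 M K S Rc Rx \<beta> \<gamma> c P x mu_s nx \<xi> \<eta> \<alpha> \<theta>L \<Delta>min a istar
    proof (intro ctx2.intro ctx.intro ctx2_axioms.intro)
      show "prob_space M" using nd unfolding nd_bandit_def by blast
    qed (use nd thL istar opt Dm pol assms in \<open>simp_all add: nd_bandit_def\<close>)
    have thp: "thp = th'" unfolding th'_def R ..
    have Rnn: "R \<ge> 0" using R Rx_nn Rc_nn by simp
    have e1: "exp (2 * \<beta> * R) \<ge> 1" using Rnn assms by simp
    have P1: "\<bar>mu istar - integral\<^sup>L M (rho_bar K \<beta> \<gamma> S c x nx a n)\<bar> \<le> C * exp (2 * \<beta> * R) * real n powr (eta' - 1)"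
      if n1: "n \<ge> 1" for n
    proof -
      have "\<bar>mu istar - integral\<^sup>L M (rho_bar K \<beta> \<gamma> S c x nx a n)\<bar> \<le> C * real n powr (eta' - 1)"
        using part1[OF n1] unfolding C_def thp .
      also have "\<dots> \<le> C * exp (2 * \<beta> * R) * real n powr (eta' - 1)"
      proof -
        have "C * real n powr (eta' - 1) * 1 \<le> C * real n powr (eta' - 1) * exp (2 * \<beta> * R)"
          using C0 by (intro mult_left_mono[OF e1]) simp
        then show ?thesis by (simp add: ac_simps)
      qed
      finally show ?thesis .
    qed
    have P2: "(\<lambda>n. integral\<^sup>L M (rho_bar K \<beta> \<gamma> S c x nx a n)) \<longlonglongrightarrow> mu istar"
    proof (rule LIM_zero_cancel, rule Lim_null_comparison)
      show "\<forall>\<^sub>F n in sequentially. norm (integral\<^sup>L M (rho_bar K \<beta> \<gamma> S c x nx a n) - mu istar) \<le> C * exp (2 * \<beta> * R) * real n powr (eta' - 1)"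
        using eventually_ge_at_top[of 1] by eventually_elim (use P1 in \<open>auto simp: abs_minus_commute\<close>)
      have "(\<lambda>n. real n powr (eta' - 1)) \<longlonglongrightarrow> 0"
        using eta'_lt by (intro tendsto_neg_powr filterlim_real_sequentially) auto
      then show "(\<lambda>n. C * exp (2 * \<beta> * R) * real n powr (eta' - 1)) \<longlonglongrightarrow> 0"
        by (rule tendsto_mult_right_zero)
    qed
    show "let \<mu>star = mu_arm \<beta> \<gamma> c P mu_s istar;
            \<rho>bar = rho_bar K \<beta> \<gamma> S c x nx a;
            \<eta>' = \<alpha> / (\<xi> * (1 - \<eta>));
            \<xi>' = \<alpha> - 1
        in (\<forall>n::nat. n \<ge> 1 \<longrightarrow>
              \<bar>\<mu>star - integral\<^sup>L M (\<rho>bar n)\<bar> \<le> C * exp (2 * \<beta> * R) * real n powr (\<eta>' - 1)) \<and>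
           ((\<lambda>n. integral\<^sup>L M (\<rho>bar n)) \<longlonglongrightarrow> \<mu>star) \<and>
           (\<forall>z::real. \<forall>n::nat. z \<ge> 1 \<longrightarrow> n \<ge> 1 \<longrightarrow>
              measure M {w \<in> space M. real n * \<rho>bar n w - real n * \<mu>star \<ge> real n powr \<eta>' * z}
                \<le> th' / z powr \<xi>' \<and>
              measure M {w \<in> space M. real n * \<rho>bar n w - real n * \<mu>star \<le> - (real n powr \<eta>' * z)}
                \<le> th' / z powr \<xi>')"
      unfolding Let_def using P1 P2 tail_upper tail_lower unfolding thp by auto
  qed
qed



end
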